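(* Let $\theta$ be a symmetric probability measure on $\mathbb{Z}^4$ with small exponential moments, not supported on a strict subgroup, with covariance matrix $\sigma^2\mathrm{Id}$, let $S$ be the random walk with jump law $\theta$ started at $0$ and $G(x)=\sum_{k\ge0}P(S_k=x)$ its Green function. For every integer $p\ge1$ there exists a constant $C(p)$ such that for every $n\ge2$, $$E\Big[\Big(\sum_{j=0}^nG(S_j)\Big)^p\Big]\le C(p)(\log n)^p.$$ *)

theory Defs
  imports "HOL-Probability.Probability"
begin

definition znorm :: "int ^ 4 \<Rightarrow> real" where
  "znorm x = sqrt (\<Sum>i\<in>UNIV. (real_of_int (x $ i))\<^sup>2)"

definition add_subgroup :: "(int ^ 4) set \<Rightarrow> bool" where
  "add_subgroup H \<longleftrightarrow> 0 \<in> H \<and> (\<forall>x\<in>H. \<forall>y\<in>H. x - y \<in> H)"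

primrec walk_pmf :: "(int ^ 4) pmf \<Rightarrow> nat \<Rightarrow> (int ^ 4) pmf" where
  "walk_pmf \<theta> 0 = return_pmf 0"
| "walk_pmf \<theta> (Suc k) = bind_pmf (walk_pmf \<theta> k) (\<lambda>s. map_pmf (\<lambda>y. s + y) \<theta>)"

text \<open>Law of the path (S_0, ..., S_n) as a list of length n+1.\<close>
primrec path_pmf :: "(int ^ 4) pmf \<Rightarrow> nat \<Rightarrow> (int ^ 4) list pmf" where
  "path_pmf \<theta> 0 = return_pmf [0]"
| "path_pmf \<theta> (Suc n) = bind_pmf (path_pmf \<theta> n) (\<lambda>xs. map_pmf (\<lambda>y. xs @ [last xs + y]) \<theta>)"

definition green :: "(int ^ 4) pmf \<Rightarrow> int ^ 4 \<Rightarrow> ennreal" where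
  "green \<theta> x = (\<Sum>k. ennreal (pmf (walk_pmf \<theta> k) x))"

end

theory Submission
  imports Defs "HOL-Real_Asymp.Real_Asymp"
begin


lemma walk_add:
  "walk_pmf \<theta> (j + k) = bind_pmf (walk_pmf \<theta> j) (\<lambda>s. map_pmf (\<lambda>u. s + u) (walk_pmf \<theta> k))"
proof (induction k)
  case 0
  then show ?case by (simp add: bind_return_pmf')
next
  case (Suc k)
  show ?case
    by (simp add: Suc bind_assoc_pmf bind_map_pmf map_bind_pmf pmf.map_comp o_def add.assoc[symmetric])
qed

lemma walk_one: "walk_pmf \<theta> 1 = \<theta>"
proof -
  have "(+) (0::int^4) = (\<lambda>x. x)" by auto
  then show ?thesis by (simp add: bind_return_pmf)
qed

lemma walk_Suc': "walk_pmf \<theta> (Suc j) = bind_pmf \<theta> (\<lambda>s. map_pmf (\<lambda>u. s + u) (walk_pmf \<theta> j))"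
  using walk_add[of \<theta> 1 j] by (simp only: walk_one plus_1_eq_Suc)

lemma map_uminus_theta:
  fixes \<theta> :: "(int^4) pmf"
  assumes sym: "\<And>x. pmf \<theta> (- x) = pmf \<theta> x"
  shows "map_pmf uminus \<theta> = \<theta>"
proof (rule pmf_eqI)
  fix x :: "int^4"
  have "pmf (map_pmf uminus \<theta>) (- (- x)) = pmf \<theta> (- x)"
    by (rule pmf_map_inj') (simp add: inj_def)
  then show "pmf (map_pmf uminus \<theta>) x = pmf \<theta> x" using sym by simp
qed

lemma map_uminus_walk:
  fixes \<theta> :: "(int^4) pmf"
  assumes sym: "\<And>x. pmf \<theta> (- x) = pmf \<theta> x"
  shows "map_pmf uminus (walk_pmf \<theta> j) = walk_pmf \<theta> j"
proof (induction j)
  case 0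
  then show ?case by simp
next
  case (Suc j)
  have "map_pmf uminus (walk_pmf \<theta> (Suc j))
      = bind_pmf (walk_pmf \<theta> j) (\<lambda>s. map_pmf (\<lambda>y. - (s + y)) \<theta>)"
    by (simp add: map_bind_pmf pmf.map_comp o_def)
  also have "\<dots> = bind_pmf (walk_pmf \<theta> j) (\<lambda>s. map_pmf (\<lambda>y. - s + y) (map_pmf uminus \<theta>))"
    by (intro bind_pmf_cong refl) (simp add: pmf.map_comp o_def; rule map_pmf_cong; auto simp: algebra_simps)
  also have "\<dots> = bind_pmf (map_pmf uminus (walk_pmf \<theta> j)) (\<lambda>s. map_pmf (\<lambda>y. s + y) \<theta>)"
    by (simp only: map_uminus_theta[OF sym] bind_map_pmf)
  also have "\<dots> = walk_pmf \<theta> (Suc j)" by (simp add: Suc)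
  finally show ?case .
qed

lemma walk_sym:
  fixes \<theta> :: "(int^4) pmf"
  assumes sym: "\<And>x. pmf \<theta> (- x) = pmf \<theta> x"
  shows "pmf (walk_pmf \<theta> j) (- y) = pmf (walk_pmf \<theta> j) y"
proof -
  have "pmf (map_pmf uminus (walk_pmf \<theta> j)) (- y) = pmf (walk_pmf \<theta> j) y"
    by (rule pmf_map_inj') (simp add: inj_def)
  then show ?thesis by (simp add: map_uminus_walk[OF sym])
qed

definition gj :: "(int ^ 4) pmf \<Rightarrow> nat \<Rightarrow> int ^ 4 \<Rightarrow> ennreal" where
  "gj \<theta> j x = (\<integral>\<^sup>+ s. green \<theta> (x + s) \<partial>measure_pmf (walk_pmf \<theta> j))"

lemma gj_0: "gj \<theta> 0 x = green \<theta> x"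
  by (simp add: gj_def)

lemma gj_Suc: "gj \<theta> (Suc j) x = (\<integral>\<^sup>+ y. gj \<theta> j (x + y) \<partial>measure_pmf \<theta>)"
  unfolding gj_def walk_Suc' by (simp add: add.assoc)

lemma telesc:
  fixes K :: real and j :: nat
  shows "(\<lambda>k. K / ((real (j + k) + 1) * (real (j + k) + 2))) sums (K / (real j + 1))"
proof -
  define f where "f n = - K / (real (j + n) + 1)" for n
  have "f \<longlonglongrightarrow> - K * 0"
    unfolding f_def by real_asymp
  then have "(\<lambda>n. f (Suc n) - f n) sums (0 - f 0)"
    using telescope_sums by fastforce
  moreover have "f (Suc n) - f n = K / ((real (j + n) + 1) * (real (j + n) + 2))" for n
    unfolding f_def by (simp add: field_simps)
  ultimately show ?thesis unfolding f_def by simp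
qed

lemma gj_bound:
  assumes sym: "\<And>x. pmf \<theta> (- x) = pmf \<theta> x"
    and decay: "\<And>j y. pmf (walk_pmf \<theta> j) y \<le> K / ((real j + 1) * (real j + 2))"
  shows "gj \<theta> j x \<le> ennreal (K / (real j + 1))"
proof -
  have K0: "K \<ge> 0"
  proof -
    have "0 \<le> pmf (walk_pmf \<theta> 0) 0" by simp
    also have "\<dots> \<le> K / ((real 0 + 1) * (real 0 + 2))" by (rule decay)
    finally show ?thesis by simp
  qed
  have "gj \<theta> j x = (\<integral>\<^sup>+ s. (\<Sum>k. ennreal (pmf (walk_pmf \<theta> k) (x + s))) \<partial>measure_pmf (walk_pmf \<theta> j))"
    by (simp add: gj_def green_def)
  also have "\<dots> = (\<Sum>k. \<integral>\<^sup>+ s. ennreal (pmf (walk_pmf \<theta> k) (x + s)) \<partial>measure_pmf (walk_pmf \<theta> j))"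
    by (rule nn_integral_suminf) simp
  also have "\<dots> = (\<Sum>k. ennreal (pmf (walk_pmf \<theta> (j + k)) (- x)))"
  proof (rule suminf_cong)
    fix k
    have "ennreal (pmf (walk_pmf \<theta> (j + k)) (- x))
        = (\<integral>\<^sup>+ s. ennreal (pmf (map_pmf (\<lambda>u. s + u) (walk_pmf \<theta> k)) (- x)) \<partial>measure_pmf (walk_pmf \<theta> j))"
      by (simp add: walk_add ennreal_pmf_bind)
    also have "\<dots> = (\<integral>\<^sup>+ s. ennreal (pmf (walk_pmf \<theta> k) (x + s)) \<partial>measure_pmf (walk_pmf \<theta> j))"
    proof (rule nn_integral_cong)
      fix s
      have "pmf (map_pmf (\<lambda>u. s + u) (walk_pmf \<theta> k)) (s + (- x - s)) = pmf (walk_pmf \<theta> k) (- x - s)"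
        by (rule pmf_map_inj') (simp add: inj_def)
      also have "\<dots> = pmf (walk_pmf \<theta> k) (- (x + s))"
      proof -
        have e: "- x - s = - (x + s)" by (simp add: algebra_simps)
        show ?thesis by (simp only: e)
      qed
      also have "\<dots> = pmf (walk_pmf \<theta> k) (x + s)" by (rule walk_sym[OF sym])
      finally show "ennreal (pmf (map_pmf (\<lambda>u. s + u) (walk_pmf \<theta> k)) (- x)) = ennreal (pmf (walk_pmf \<theta> k) (x + s))"
        by simp
    qed
    finally show "(\<integral>\<^sup>+ s. ennreal (pmf (walk_pmf \<theta> k) (x + s)) \<partial>measure_pmf (walk_pmf \<theta> j)) = ennreal (pmf (walk_pmf \<theta> (j + k)) (- x))"
      by simp
  qed
  also have "\<dots> \<le> (\<Sum>k. ennreal (K / ((real (j + k) + 1) * (real (j + k) + 2))))"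
    by (intro suminf_le ennreal_leI decay) auto
  also have "\<dots> = ennreal (\<Sum>k. K / ((real (j + k) + 1) * (real (j + k) + 2)))"
    by (rule suminf_ennreal2) (use K0 telesc sums_summable in auto)
  also have "\<dots> = ennreal (K / (real j + 1))"
    using telesc sums_unique by metis
  finally show ?thesis .
qed

primrec pathx :: "(int ^ 4) pmf \<Rightarrow> int ^ 4 \<Rightarrow> nat \<Rightarrow> (int ^ 4) list pmf" where
  "pathx \<theta> x 0 = return_pmf [x]"
| "pathx \<theta> x (Suc n) = bind_pmf \<theta> (\<lambda>y. map_pmf (\<lambda>xs. x # xs) (pathx \<theta> (x + y) n))"

lemma pathx_ne: "xs \<in> set_pmf (pathx \<theta> x n) \<Longrightarrow> xs \<noteq> []"
  by (cases n) auto

lemma pathx_snoc: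
  "pathx \<theta> x (Suc n) = bind_pmf (pathx \<theta> x n) (\<lambda>xs. map_pmf (\<lambda>y. xs @ [last xs + y]) \<theta>)"
proof (induction n arbitrary: x)
  case 0
  then show ?case by (simp add: map_pmf_def bind_return_pmf)
next
  case (Suc n)
  have "pathx \<theta> x (Suc (Suc n))
      = bind_pmf \<theta> (\<lambda>y. bind_pmf (pathx \<theta> (x + y) n)
            (\<lambda>xs. map_pmf (\<lambda>z. x # (xs @ [last xs + z])) \<theta>))"
    by (simp only: pathx.simps(2)[of \<theta> x "Suc n"] Suc map_bind_pmf pmf.map_comp o_def)
  also have "\<dots> = bind_pmf \<theta> (\<lambda>y. bind_pmf (pathx \<theta> (x + y) n)
            (\<lambda>xs. map_pmf (\<lambda>z. (x # xs) @ [last (x # xs) + z]) \<theta>))"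
    by (intro bind_pmf_cong refl) (auto dest: pathx_ne)
  also have "\<dots> = bind_pmf (pathx \<theta> x (Suc n)) (\<lambda>xs. map_pmf (\<lambda>y. xs @ [last xs + y]) \<theta>)"
    by (simp add: bind_assoc_pmf bind_map_pmf)
  finally show ?case .
qed

lemma path_eq: "path_pmf \<theta> n = pathx \<theta> 0 n"
proof (induction n)
  case 0
  then show ?case by simp
next
  case (Suc n)
  have "path_pmf \<theta> (Suc n) = bind_pmf (pathx \<theta> 0 n) (\<lambda>xs. map_pmf (\<lambda>y. xs @ [last xs + y]) \<theta>)"
    by (simp add: Suc)
  also have "\<dots> = pathx \<theta> 0 (Suc n)" by (rule pathx_snoc[symmetric])
  finally show ?case .
qed

definition W :: "(int ^ 4) pmf \<Rightarrow> nat \<Rightarrow> nat \<Rightarrow> int ^ 4 \<Rightarrow> ennreal" where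
  "W \<theta> p n x = (\<integral>\<^sup>+ xs. (\<Sum>y\<leftarrow>xs. green \<theta> y) ^ p \<partial>measure_pmf (pathx \<theta> x n))"

lemma ennreal_pow_split:
  fixes a b :: ennreal
  shows "(a + b) ^ Suc q \<le> b ^ Suc q + of_nat (Suc q) * a * (a + b) ^ q"
proof (induction q)
  case 0
  then show ?case by (simp add: add.commute)
next
  case (Suc q)
  have "(a + b) ^ Suc (Suc q) = a * (a + b) ^ Suc q + b * (a + b) ^ Suc q"
    by (simp add: distrib_right)
  also have "\<dots> \<le> a * (a + b) ^ Suc q + b * (b ^ Suc q + of_nat (Suc q) * a * (a + b) ^ q)"
    by (intro add_mono order.refl mult_left_mono Suc) auto
  also have "\<dots> = b ^ Suc (Suc q) + a * (a + b) ^ Suc q + of_nat (Suc q) * a * (b * (a + b) ^ q)"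
    by (simp add: algebra_simps)
  also have "\<dots> \<le> b ^ Suc (Suc q) + a * (a + b) ^ Suc q + of_nat (Suc q) * a * ((a + b) ^ Suc q)"
    by (intro add_mono order.refl mult_left_mono) (auto intro: mult_right_mono)
  also have "\<dots> = b ^ Suc (Suc q) + of_nat (Suc (Suc q)) * a * (a + b) ^ Suc q"
    by (simp add: algebra_simps)
  finally show ?case .
qed

lemma W_Suc:
  "W \<theta> p (Suc m) x = (\<integral>\<^sup>+ y. \<integral>\<^sup>+ xs. (green \<theta> x + (\<Sum>z\<leftarrow>xs. green \<theta> z)) ^ p
       \<partial>measure_pmf (pathx \<theta> (x + y) m) \<partial>measure_pmf \<theta>)"
  by (simp add: W_def)

lemma W_step:
  assumes hyp: "\<And>m x. m \<le> n \<Longrightarrow> W \<theta> q m x \<le> B"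
  shows "m \<le> n \<Longrightarrow> W \<theta> (Suc q) m x \<le> of_nat (Suc q) * B * (\<Sum>j\<le>m. gj \<theta> j x)"
proof (induction m arbitrary: x)
  case 0
  have "W \<theta> (Suc q) 0 x = (green \<theta> x + 0) ^ Suc q" by (simp add: W_def)
  also have "\<dots> \<le> 0 ^ Suc q + of_nat (Suc q) * green \<theta> x * (green \<theta> x + 0) ^ q"
    by (rule ennreal_pow_split)
  also have "\<dots> = of_nat (Suc q) * green \<theta> x * W \<theta> q 0 x" by (simp add: W_def)
  also have "\<dots> \<le> of_nat (Suc q) * green \<theta> x * B"
    by (intro mult_left_mono hyp) auto
  also have "\<dots> = of_nat (Suc q) * B * (\<Sum>j\<le>0. gj \<theta> j x)"
    by (simp add: gj_0 mult_ac)
  finally show ?case .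
next
  case (Suc m)
  let ?S = "\<lambda>xs. (\<Sum>z\<leftarrow>xs. green \<theta> z)"
  let ?G = "green \<theta> x"
  have "W \<theta> (Suc q) (Suc m) x = (\<integral>\<^sup>+ y. \<integral>\<^sup>+ xs. (?G + ?S xs) ^ Suc q
       \<partial>measure_pmf (pathx \<theta> (x + y) m) \<partial>measure_pmf \<theta>)" by (rule W_Suc)
  also have "\<dots> \<le> (\<integral>\<^sup>+ y. \<integral>\<^sup>+ xs. (?S xs ^ Suc q + of_nat (Suc q) * ?G * (?G + ?S xs) ^ q)
       \<partial>measure_pmf (pathx \<theta> (x + y) m) \<partial>measure_pmf \<theta>)"
    by (intro nn_integral_mono ennreal_pow_split)
  also have "\<dots> = (\<integral>\<^sup>+ y. W \<theta> (Suc q) m (x + y) \<partial>measure_pmf \<theta>)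
       + of_nat (Suc q) * ?G * W \<theta> q (Suc m) x"
    by (simp add: W_Suc nn_integral_add nn_integral_cmult W_def)
  also have "\<dots> \<le> (\<integral>\<^sup>+ y. of_nat (Suc q) * B * (\<Sum>j\<le>m. gj \<theta> j (x + y)) \<partial>measure_pmf \<theta>)
       + of_nat (Suc q) * ?G * B"
    using Suc by (intro add_mono nn_integral_mono mult_left_mono hyp) auto
  also have "\<dots> = of_nat (Suc q) * B * (\<Sum>j\<le>m. gj \<theta> (Suc j) x) + of_nat (Suc q) * ?G * B"
    by (simp add: nn_integral_cmult nn_integral_sum gj_Suc)
  also have "\<dots> = of_nat (Suc q) * B * ((\<Sum>j\<le>m. gj \<theta> (Suc j) x) + gj \<theta> 0 x)"
    by (simp add: gj_0 distrib_left mult_ac)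
  also have "\<dots> = of_nat (Suc q) * B * (\<Sum>j\<le>Suc m. gj \<theta> j x)"
    unfolding sum.atMost_Suc_shift[of _ m] by (simp add: ac_simps)
  finally show ?case .
qed

lemma W_bound:
  assumes L0: "L \<ge> 0" and gs: "\<And>m x. m \<le> n \<Longrightarrow> (\<Sum>j\<le>m. gj \<theta> j x) \<le> ennreal L"
  shows "m \<le> n \<Longrightarrow> W \<theta> p m x \<le> ennreal (fact p * L ^ p)"
proof (induction p arbitrary: m x)
  case 0
  then show ?case by (simp add: W_def measure_pmf.emeasure_space_1)
next
  case (Suc q)
  have "W \<theta> (Suc q) m x \<le> of_nat (Suc q) * ennreal (fact q * L ^ q) * (\<Sum>j\<le>m. gj \<theta> j x)"
    by (rule W_step[of n]) (use Suc in auto)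
  also have "\<dots> \<le> of_nat (Suc q) * ennreal (fact q * L ^ q) * ennreal L"
    by (intro mult_left_mono gs Suc.prems) auto
  also have "\<dots> = ennreal (real (Suc q) * (fact q * L ^ q) * L)"
    using L0 by (simp add: ennreal_of_nat_eq_real_of_nat ennreal_mult)
  also have "\<dots> = ennreal (fact (Suc q) * L ^ Suc q)"
    by (simp add: mult_ac)
  finally show ?case .
qed

lemma harm_bound: "(\<Sum>j\<le>n. 1 / (real j + 1)) \<le> 1 + ln (real n + 1)"
proof (induction n)
  case 0
  then show ?case by simp
next
  case (Suc n)
  have "ln ((real n + 1) / (real n + 2)) \<le> (real n + 1) / (real n + 2) - 1"
    by (rule ln_le_minus_one) auto
  then have "1 / (real n + 2) \<le> ln (real n + 2) - ln (real n + 1)"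
    by (simp add: ln_div field_simps)
  moreover have "(\<Sum>j\<le>Suc n. 1 / (real j + 1)) = (\<Sum>j\<le>n. 1 / (real j + 1)) + 1 / (real n + 2)"
    by (simp add: add_ac)
  moreover have "ln (real (Suc n) + 1) = ln (real n + 2)" by (simp add: add_ac)
  ultimately show ?case using Suc by linarith
qed

lemma log_bound:
  assumes "n \<ge> 2"
  shows "1 + ln (real n + 1) \<le> 4 * ln (real n)"
proof -
  have "ln 2 \<ge> (1::real) / 2"
  proof -
    have "ln (1/2) \<le> (1::real)/2 - 1" by (rule ln_le_minus_one) auto
    then show ?thesis by (simp add: ln_div)
  qed
  moreover have "ln 2 \<le> ln (real n)" using assms by simp
  moreover have "ln (real n + 1) \<le> ln (2 * real n)" using assms by simp
  moreover have "ln (2 * real n) = ln 2 + ln (real n)" using assms by (simp add: ln_mult)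
  ultimately show ?thesis by linarith
qed

theorem partB:
  assumes sym: "\<And>x. pmf \<theta> (- x) = pmf \<theta> x"
    and decay: "\<And>j y. pmf (walk_pmf \<theta> j) y \<le> K / ((real j + 1) * (real j + 2))"
  shows "\<exists>C::real. \<forall>n::nat. n \<ge> 2 \<longrightarrow>
           (\<integral>\<^sup>+ xs. (\<Sum>x\<leftarrow>xs. green \<theta> x) ^ p \<partial>measure_pmf (path_pmf \<theta> n))
             \<le> ennreal (C * (ln (real n)) ^ p)"
proof -
  have K0: "K \<ge> 0"
  proof -
    have "0 \<le> pmf (walk_pmf \<theta> 0) 0" by simp
    also have "\<dots> \<le> K / ((real 0 + 1) * (real 0 + 2))" by (rule decay)
    finally show ?thesis by simp
  qed
  show ?thesis
  proof (intro exI allI impI)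
    fix n :: nat assume n2: "n \<ge> 2"
    define L where "L = K * (\<Sum>j\<le>n. 1 / (real j + 1))"
    have L0: "L \<ge> 0" unfolding L_def using K0 by (auto intro!: mult_nonneg_nonneg sum_nonneg)
    have gs: "(\<Sum>j\<le>m. gj \<theta> j x) \<le> ennreal L" if "m \<le> n" for m x
    proof -
      have "(\<Sum>j\<le>m. gj \<theta> j x) \<le> (\<Sum>j\<le>m. ennreal (K / (real j + 1)))"
        by (intro sum_mono gj_bound[OF sym decay])
      also have "\<dots> = ennreal (\<Sum>j\<le>m. K / (real j + 1))"
        using K0 by (simp add: sum_ennreal)
      also have "\<dots> \<le> ennreal (\<Sum>j\<le>n. K / (real j + 1))"
        using K0 that by (intro ennreal_leI sum_mono2) auto
      also have "\<dots> = ennreal L" by (simp add: L_def sum_distrib_left)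
      finally show ?thesis .
    qed
    have "(\<integral>\<^sup>+ xs. (\<Sum>x\<leftarrow>xs. green \<theta> x) ^ p \<partial>measure_pmf (path_pmf \<theta> n)) = W \<theta> p n 0"
      by (simp add: W_def path_eq)
    also have "\<dots> \<le> ennreal (fact p * L ^ p)"
      by (rule W_bound[OF L0 gs]) auto
    also have "\<dots> \<le> ennreal ((fact p * (4 * K) ^ p) * ln (real n) ^ p)"
    proof (intro ennreal_leI)
      have "L \<le> K * (4 * ln (real n))"
        unfolding L_def using harm_bound[of n] log_bound[OF n2] K0
        by (intro mult_left_mono) auto
      then have "L ^ p \<le> (4 * K * ln (real n)) ^ p"
        using L0 by (intro power_mono) (auto simp: mult_ac)
      then show "fact p * L ^ p \<le> (fact p * (4 * K) ^ p) * ln (real n) ^ p"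
        by (simp add: power_mult_distrib mult_ac)
    qed
    finally show "(\<integral>\<^sup>+ xs. (\<Sum>x\<leftarrow>xs. green \<theta> x) ^ p \<partial>measure_pmf (path_pmf \<theta> n))
             \<le> ennreal ((fact p * (4 * K) ^ p) * ln (real n) ^ p)" .
  qed
qed



definition xr :: "int ^ 4 \<Rightarrow> real ^ 4" where "xr x = (\<chi> i. real_of_int (x $ i))"

lemma xr_nth[simp]: "xr x $ i = real_of_int (x $ i)" by (simp add: xr_def)
lemma xr_diff: "xr (x - y) = xr x - xr y" by (simp add: vec_eq_iff)
lemma xr_add: "xr (x + y) = xr x + xr y" by (simp add: vec_eq_iff)
lemma xr_minus: "xr (- x) = - xr x" by (simp add: vec_eq_iff)
lemma xr_0[simp]: "xr 0 = 0" by (simp add: vec_eq_iff)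
lemma znorm_xr: "znorm x = norm (xr x)"
  by (simp add: znorm_def norm_vec_def L2_set_def)

lemma pmf_int_A:
  fixes f :: "'a \<Rightarrow> real"
  assumes i: "integrable (count_space UNIV) (\<lambda>x. pmf p x * f x)"
  shows "integrable (measure_pmf p) f"
proof -
  have "integrable (density (count_space UNIV) (\<lambda>x. ennreal (pmf p x))) f"
    by (subst integrable_density) (simp_all add: i)
  then show ?thesis by (simp add: measure_pmf_eq_density)
qed

lemma pmf_int_B:
  fixes f :: "'a \<Rightarrow> real"
  shows "measure_pmf.expectation p f = (\<integral>x. pmf p x * f x \<partial>count_space UNIV)"
proof -
  have "integral\<^sup>L (density (count_space UNIV) (\<lambda>x. ennreal (pmf p x))) f = (\<integral>x. pmf p x * f x \<partial>count_space UNIV)"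
    by (subst integral_density) simp_all
  then show ?thesis by (simp add: measure_pmf_eq_density)
qed

lemma pmf_int_infsum:
  fixes f :: "'a \<Rightarrow> real"
  assumes S: "(\<lambda>x. pmf p x * f x) summable_on UNIV"
  shows "integrable (measure_pmf p) f \<and> measure_pmf.expectation p f = (\<Sum>\<^sub>\<infinity>x. pmf p x * f x)"
proof -
  have "(\<lambda>x. norm (pmf p x * f x)) summable_on UNIV"
    using S by (rule summable_on_iff_abs_summable_on_real[THEN iffD1])
  then have a: "Infinite_Set_Sum.abs_summable_on (\<lambda>x. pmf p x * f x) UNIV"
    by (rule abs_summable_equivalent[THEN iffD1])
  then have i: "integrable (count_space UNIV) (\<lambda>x. pmf p x * f x)"
    by (simp add: Infinite_Set_Sum.abs_summable_on_def)
  have "measure_pmf.expectation p f = infsetsum (\<lambda>x. pmf p x * f x) UNIV"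
    by (simp add: pmf_int_B infsetsum_def)
  also have "\<dots> = (\<Sum>\<^sub>\<infinity>x. pmf p x * f x)"
    using a by (rule infsetsum_infsum)
  finally show ?thesis using pmf_int_A[OF i] by simp
qed

lemma integral_bind_pmf_bdd:
  fixes f :: "'a \<Rightarrow> real"
  assumes "\<And>x. \<bar>f x\<bar> \<le> B"
  shows "measure_pmf.expectation (bind_pmf M N) f
         = measure_pmf.expectation M (\<lambda>x. measure_pmf.expectation (N x) f)"
  unfolding measure_pmf_bind
  by (rule integral_bind[where K="count_space UNIV" and B=B and B'=1])
     (auto simp: assms space_subprob_algebra subprob_space_measure_pmf measure_pmf.emeasure_space_1
           intro: measure_pmf.finite_measure_axioms)

lemma integrable_bdd_pmf:
  fixes f :: "'a \<Rightarrow> real"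
  assumes "\<And>x. \<bar>f x\<bar> \<le> B"
  shows "integrable (measure_pmf M) f"
  by (rule measure_pmf.integrable_const_bound[where B=B]) (auto simp: assms)

lemma cos_le4: "cos (u::real) \<le> 1 - u\<^sup>2 / 2 + u ^ 4 / 24"
proof -
  obtain t where "cos u = (\<Sum>m<4. cos_coeff m * u ^ m) + (cos (t + 1/2 * real 4 * pi) / fact 4) * u ^ 4"
    using Maclaurin_cos_expansion[of u 4] by blast
  moreover have "(\<Sum>m<4. cos_coeff m * u ^ m) = 1 - u\<^sup>2 / 2"
  proof -
    have "{..<4::nat} = {0,1,2,3}" by auto
    then show ?thesis by (simp add: cos_coeff_def)
  qed
  moreover have "(cos (t + 1/2 * real 4 * pi) / fact 4) * u ^ 4 \<le> u ^ 4 / 24"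
  proof -
    have "cos (t + 1/2 * real 4 * pi) \<le> 1" by simp
    moreover have "u ^ 4 \<ge> 0" by (simp add: zero_le_even_power)
    ultimately have "cos (t + 1/2 * real 4 * pi) * u ^ 4 \<le> 1 * u ^ 4"
      by (intro mult_right_mono) auto
    then show ?thesis by (simp add: fact_numeral divide_right_mono)
  qed
  ultimately show ?thesis by linarith
qed

lemma cos_ge2: "1 - u\<^sup>2 / 2 \<le> cos (u::real)"
proof -
  obtain t where "cos u = (\<Sum>m<2. cos_coeff m * u ^ m) + (cos (t + 1/2 * real 2 * pi) / fact 2) * u ^ 2"
    using Maclaurin_cos_expansion[of u 2] by blast
  moreover have "(\<Sum>m<2. cos_coeff m * u ^ m) = 1"
  proof -
    have "{..<2::nat} = {0,1}" by auto
    then show ?thesis by (simp add: cos_coeff_def)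
  qed
  moreover have "(cos (t + 1/2 * real 2 * pi) / fact 2) * u ^ 2 \<ge> - (u ^ 2 / 2)"
  proof -
    have "cos (t + 1/2 * real 2 * pi) \<ge> -1" by simp
    moreover have "u ^ 2 \<ge> 0" by simp
    ultimately have "cos (t + 1/2 * real 2 * pi) * u ^ 2 \<ge> -1 * u ^ 2"
      by (intro mult_right_mono) auto
    then show ?thesis by (simp add: fact_numeral)
  qed
  ultimately show ?thesis by linarith
qed

lemma abs_cos_diff: "\<bar>cos a - cos b\<bar> \<le> \<bar>a - (b::real)\<bar>"
proof -
  have "\<bar>cos a - cos b\<bar> = 2 * \<bar>sin ((a + b) / 2)\<bar> * \<bar>sin ((b - a) / 2)\<bar>"
    by (simp add: cos_diff_cos abs_mult)
  also have "\<dots> \<le> 2 * 1 * \<bar>(b - a) / 2\<bar>"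
    by (intro mult_mono abs_sin_x_le_abs_x) auto
  finally show ?thesis by simp
qed

lemma inner_sq_gen: "(s \<bullet> (v::real^4))\<^sup>2 = (\<Sum>i\<in>UNIV. \<Sum>j\<in>UNIV. s$i * s$j * (v$i * v$j))"
  unfolding inner_vec_def power2_eq_square sum_product
  by (intro sum.cong refl) (simp add: mult_ac)

lemma key1: "1 + z ^ 4 \<le> (1 + (4 / c) ^ 4) * exp (c * z)" if z: "z \<ge> 0" and c: "c > 0" for z c :: real
proof -
  have e1: "1 \<le> exp (c * z)" using c z by simp
  have "c * z / 4 \<le> exp (c * z / 4)" using exp_ge_add_one_self[of "c * z / 4"] by linarith
  then have "(c * z / 4) ^ 4 \<le> exp (c * z / 4) ^ 4"
    using c z by (intro power_mono) auto
  also have "exp (c * z / 4) ^ 4 = exp (c * z)"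
    using exp_of_nat_mult[of 4 "c * z / 4"] by simp
  finally have a: "(c * z / 4) ^ 4 \<le> exp (c * z)" .
  have b: "z ^ 4 = (4 / c) ^ 4 * (c * z / 4) ^ 4"
    using c by (simp add: power_mult_distrib[symmetric])
  have "z ^ 4 \<le> (4 / c) ^ 4 * exp (c * z)"
    unfolding b by (rule mult_left_mono[OF a]) simp
  moreover have "(1 + (4 / c) ^ 4) * exp (c * z) = exp (c * z) + (4 / c) ^ 4 * exp (c * z)"
    by (simp add: algebra_simps)
  ultimately show ?thesis using e1 by linarith
qed

locale rw =
  fixes \<theta> :: "(int ^ 4) pmf" and \<sigma> :: real
  assumes symmetric: "\<And>x. pmf \<theta> (- x) = pmf \<theta> x"
    and exp_moment: "\<exists>c>0. (\<lambda>x. pmf \<theta> x * exp (c * znorm x)) summable_on UNIV"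
    and not_strict_subgroup: "\<not> (\<exists>H. add_subgroup H \<and> H \<noteq> UNIV \<and> set_pmf \<theta> \<subseteq> H)"
    and covariance: "\<And>i j. (\<Sum>\<^sub>\<infinity>x. pmf \<theta> x * real_of_int (x $ i) * real_of_int (x $ j))
                         = (if i = j then \<sigma>\<^sup>2 else 0)"
begin

lemma summ_dom:
  assumes h: "\<And>x. \<bar>h x\<bar> \<le> A * (1 + znorm x ^ 4)"
  shows "(\<lambda>x. pmf \<theta> x * h x) summable_on UNIV"
proof -
  obtain c where c: "c > 0" and S: "(\<lambda>x. pmf \<theta> x * exp (c * znorm x)) summable_on UNIV"
    using exp_moment by blast
  have A0: "A \<ge> 0"
  proof -
    have "0 \<le> A * (1 + znorm 0 ^ 4)" using h[of 0] by (meson abs_ge_zero order_trans)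
    moreover have "1 + znorm 0 ^ 4 > (0::real)" by (simp add: znorm_xr)
    ultimately show ?thesis by (simp add: zero_le_mult_iff)
  qed
  define D where "D = A * (1 + (4 / c) ^ 4)"
  note key = key1[OF _ c]
  have "(\<lambda>x. D * (pmf \<theta> x * exp (c * znorm x))) summable_on UNIV"
    by (rule summable_on_cmult_right[OF S])
  then have "(\<lambda>x. \<bar>pmf \<theta> x * h x\<bar>) summable_on UNIV"
  proof (rule summable_on_comparison_test)
    fix x
    have zn: "znorm x \<ge> 0" by (simp add: znorm_xr)
    have "\<bar>pmf \<theta> x * h x\<bar> = pmf \<theta> x * \<bar>h x\<bar>" by (simp add: abs_mult)
    also have "\<dots> \<le> pmf \<theta> x * (A * (1 + znorm x ^ 4))" by (intro mult_left_mono h) simp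
    also have "\<dots> \<le> pmf \<theta> x * (A * ((1 + (4 / c) ^ 4) * exp (c * znorm x)))"
      using key[OF zn] A0 by (intro mult_left_mono) auto
    also have "\<dots> = D * (pmf \<theta> x * exp (c * znorm x))" by (simp add: D_def mult_ac)
    finally show "\<bar>pmf \<theta> x * h x\<bar> \<le> D * (pmf \<theta> x * exp (c * znorm x))" .
  qed simp
  then have "(\<lambda>x. norm (pmf \<theta> x * h x)) summable_on UNIV" by (simp add: real_norm_def)
  then show ?thesis by (rule summable_on_iff_abs_summable_on_real[THEN iffD2])
qed

lemma mom:
  assumes h: "\<And>x. \<bar>h x\<bar> \<le> A * (1 + znorm x ^ 4)"
  shows "integrable (measure_pmf \<theta>) h \<and> measure_pmf.expectation \<theta> h = (\<Sum>\<^sub>\<infinity>x. pmf \<theta> x * h x)"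
  by (rule pmf_int_infsum[OF summ_dom[OF h]])

lemma xi_le: "\<bar>real_of_int (x $ i)\<bar> \<le> znorm x"
  unfolding znorm_xr using component_le_norm_cart[of "xr x" i] by simp

lemma z_le: "z ^ k \<le> 1 + z ^ 4" if "k \<le> 4" "z \<ge> 0" for z :: real
proof (cases "z \<le> 1")
  case True
  then have "z ^ k \<le> 1" using that by (simp add: power_le_one)
  moreover have "0 \<le> z ^ 4" using that by simp
  ultimately show ?thesis by linarith
next
  case False
  then have "z ^ k \<le> z ^ 4" using that by (intro power_increasing) auto
  then show ?thesis by simp
qed

lemma cov_int: "measure_pmf.expectation \<theta> (\<lambda>x. real_of_int (x $ i) * real_of_int (x $ j))
     = (if i = j then \<sigma>\<^sup>2 else 0)"
proof -
  have bd: "\<bar>real_of_int (x $ i) * real_of_int (x $ j)\<bar> \<le> 1 * (1 + znorm x ^ 4)" for x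
  proof -
    have "\<bar>real_of_int (x $ i) * real_of_int (x $ j)\<bar> \<le> znorm x * znorm x"
      unfolding abs_mult by (intro mult_mono xi_le) (auto simp: znorm_xr)
    also have "\<dots> = znorm x ^ 2" by (simp add: power2_eq_square)
    also have "\<dots> \<le> 1 + znorm x ^ 4" by (rule z_le) (auto simp: znorm_xr)
    finally show ?thesis by simp
  qed
  have e: "(\<Sum>\<^sub>\<infinity>x. pmf \<theta> x * (real_of_int (x $ i) * real_of_int (x $ j)))
      = (\<Sum>\<^sub>\<infinity>x. pmf \<theta> x * real_of_int (x $ i) * real_of_int (x $ j))"
    by (simp add: mult.assoc)
  from conjunct2[OF mom[OF bd]] show ?thesis by (simp only: e covariance)
qed

lemma int_znorm_pow:
  assumes "k \<le> 4"
  shows "integrable (measure_pmf \<theta>) (\<lambda>x. znorm x ^ k)"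
proof -
  have "\<bar>znorm x ^ k\<bar> \<le> 1 * (1 + znorm x ^ 4)" for x
    using z_le[OF assms, of "znorm x"] by (simp add: znorm_xr)
  from mom[OF this] show ?thesis by simp
qed

lemma int_xij: "integrable (measure_pmf \<theta>) (\<lambda>x. real_of_int (x $ i) * real_of_int (x $ j))"
proof (rule Bochner_Integration.integrable_bound[OF int_znorm_pow[of 2]])
  show "AE x in measure_pmf \<theta>. norm (real_of_int (x $ i) * real_of_int (x $ j)) \<le> norm (znorm x ^ 2)"
  proof (intro AE_I2)
    fix x
    have "\<bar>real_of_int (x $ i) * real_of_int (x $ j)\<bar> \<le> znorm x * znorm x"
      unfolding abs_mult by (intro mult_mono xi_le) (auto simp: znorm_xr)
    then show "norm (real_of_int (x $ i) * real_of_int (x $ j)) \<le> norm (znorm x ^ 2)"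
      by (simp add: power2_eq_square)
  qed
qed simp_all

lemma inner_sq: "(s \<bullet> xr x)\<^sup>2 = (\<Sum>i\<in>UNIV. \<Sum>j\<in>UNIV. s$i * s$j * (real_of_int (x $ i) * real_of_int (x $ j)))"
  using inner_sq_gen[of s "xr x"] by simp

lemma second_moment: "measure_pmf.expectation \<theta> (\<lambda>x. (s \<bullet> xr x)\<^sup>2) = \<sigma>\<^sup>2 * (norm s)\<^sup>2"
proof -
  have "measure_pmf.expectation \<theta> (\<lambda>x. (s \<bullet> xr x)\<^sup>2)
     = (\<Sum>i\<in>UNIV. \<Sum>j\<in>UNIV. s$i * s$j * measure_pmf.expectation \<theta> (\<lambda>x. real_of_int (x $ i) * real_of_int (x $ j)))"
    unfolding inner_sq
  proof -
    have int1: "integrable (measure_pmf \<theta>) (\<lambda>x. s$i * s$j * (real_of_int (x $ i) * real_of_int (x $ j)))" for i j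
      by (rule integrable_mult_right[OF int_xij])
    have int2: "integrable (measure_pmf \<theta>) (\<lambda>x. \<Sum>j\<in>UNIV. s$i * s$j * (real_of_int (x $ i) * real_of_int (x $ j)))" for i
      by (rule Bochner_Integration.integrable_sum) (rule int1)
    have "measure_pmf.expectation \<theta> (\<lambda>x. \<Sum>i\<in>UNIV. \<Sum>j\<in>UNIV. s$i * s$j * (real_of_int (x $ i) * real_of_int (x $ j)))
        = (\<Sum>i\<in>UNIV. measure_pmf.expectation \<theta> (\<lambda>x. \<Sum>j\<in>UNIV. s$i * s$j * (real_of_int (x $ i) * real_of_int (x $ j))))"
      by (rule Bochner_Integration.integral_sum) (rule int2)
    also have "\<dots> = (\<Sum>i\<in>UNIV. \<Sum>j\<in>UNIV. measure_pmf.expectation \<theta> (\<lambda>x. s$i * s$j * (real_of_int (x $ i) * real_of_int (x $ j))))"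
      by (rule sum.cong[OF refl], rule Bochner_Integration.integral_sum, rule int1)
    also have "\<dots> = (\<Sum>i\<in>UNIV. \<Sum>j\<in>UNIV. s$i * s$j * measure_pmf.expectation \<theta> (\<lambda>x. real_of_int (x $ i) * real_of_int (x $ j)))"
      by simp
    finally show "measure_pmf.expectation \<theta> (\<lambda>x. \<Sum>i\<in>UNIV. \<Sum>j\<in>UNIV. s$i * s$j * (real_of_int (x $ i) * real_of_int (x $ j)))
        = (\<Sum>i\<in>UNIV. \<Sum>j\<in>UNIV. s$i * s$j * measure_pmf.expectation \<theta> (\<lambda>x. real_of_int (x $ i) * real_of_int (x $ j)))" .
  qed
  also have "\<dots> = (\<Sum>i\<in>UNIV. s$i * s$i * \<sigma>\<^sup>2)"
  proof (rule sum.cong[OF refl])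
    fix i
    have "(\<Sum>j\<in>UNIV. s$i * s$j * measure_pmf.expectation \<theta> (\<lambda>x. real_of_int (x $ i) * real_of_int (x $ j)))
        = (\<Sum>j\<in>UNIV. if j = i then s$i * s$i * \<sigma>\<^sup>2 else 0)"
      by (rule sum.cong[OF refl]) (auto simp: cov_int)
    also have "\<dots> = s$i * s$i * \<sigma>\<^sup>2" by simp
    finally show "(\<Sum>j\<in>UNIV. s$i * s$j * measure_pmf.expectation \<theta> (\<lambda>x. real_of_int (x $ i) * real_of_int (x $ j)))
        = s$i * s$i * \<sigma>\<^sup>2" .
  qed
  also have "\<dots> = \<sigma>\<^sup>2 * (norm s)\<^sup>2"
    unfolding power2_norm_eq_inner inner_vec_def sum_distrib_left
    by (intro sum.cong refl) (simp add: mult_ac)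
  finally show ?thesis .
qed

lemma int_inner_pow:
  assumes "k \<le> 4"
  shows "integrable (measure_pmf \<theta>) (\<lambda>x. (s \<bullet> xr x) ^ k)"
proof (rule Bochner_Integration.integrable_bound)
  show "integrable (measure_pmf \<theta>) (\<lambda>x. norm s ^ k * znorm x ^ k)"
    using int_znorm_pow[OF assms] by simp
  show "AE x in measure_pmf \<theta>. norm ((s \<bullet> xr x) ^ k) \<le> norm (norm s ^ k * znorm x ^ k)"
  proof (intro AE_I2)
    fix x
    have "\<bar>s \<bullet> xr x\<bar> \<le> norm s * znorm x"
      unfolding znorm_xr by (rule Cauchy_Schwarz_ineq2)
    then have "\<bar>s \<bullet> xr x\<bar> ^ k \<le> (norm s * znorm x) ^ k"
      by (rule power_mono) simp
    moreover have "norm ((s \<bullet> xr x) ^ k) = \<bar>s \<bullet> xr x\<bar> ^ k"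
      by (simp add: power_abs)
    moreover have "norm (norm s ^ k * znorm x ^ k) = (norm s * znorm x) ^ k"
      by (simp add: power_mult_distrib znorm_xr)
    ultimately show "norm ((s \<bullet> xr x) ^ k) \<le> norm (norm s ^ k * znorm x ^ k)"
      by simp
  qed
qed simp

end


context rw
begin

definition phi :: "real ^ 4 \<Rightarrow> real" where
  "phi t = measure_pmf.expectation \<theta> (\<lambda>x. cos (t \<bullet> xr x))"

lemma int_cos: "integrable (measure_pmf M) (\<lambda>x. cos (t \<bullet> xr x))"
  by (rule integrable_bdd_pmf[where B=1]) simp

lemma int_sin: "integrable (measure_pmf M) (\<lambda>x. sin (t \<bullet> xr x))"
  by (rule integrable_bdd_pmf[where B=1]) simp

lemma phi_abs_le: "\<bar>phi t\<bar> \<le> 1"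
proof -
  have "\<bar>phi t\<bar> \<le> measure_pmf.expectation \<theta> (\<lambda>x. \<bar>cos (t \<bullet> xr x)\<bar>)"
    unfolding phi_def using integral_norm_bound[of "measure_pmf \<theta>" "\<lambda>x. cos (t \<bullet> xr x)"]
    by simp
  also have "\<dots> \<le> measure_pmf.expectation \<theta> (\<lambda>x. 1)"
    by (rule integral_mono) (auto intro: integrable_bdd_pmf[where B=1])
  also have "\<dots> = 1" by simp
  finally show ?thesis .
qed

lemma sin_int_sym: "measure_pmf.expectation (walk_pmf \<theta> j) (\<lambda>x. sin (t \<bullet> xr x)) = 0"
proof -
  have "measure_pmf.expectation (walk_pmf \<theta> j) (\<lambda>x. sin (t \<bullet> xr x))
      = measure_pmf.expectation (map_pmf uminus (walk_pmf \<theta> j)) (\<lambda>x. sin (t \<bullet> xr x))"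
    by (simp add: map_uminus_walk[OF symmetric])
  also have "\<dots> = measure_pmf.expectation (walk_pmf \<theta> j) (\<lambda>x. - sin (t \<bullet> xr x))"
    by (simp add: xr_minus)
  also have "\<dots> = - measure_pmf.expectation (walk_pmf \<theta> j) (\<lambda>x. sin (t \<bullet> xr x))"
    by simp
  finally show ?thesis by simp
qed

lemma charf: "measure_pmf.expectation (walk_pmf \<theta> j) (\<lambda>x. cos (t \<bullet> xr x)) = phi t ^ j"
proof (induction j)
  case 0
  then show ?case by simp
next
  case (Suc j)
  have "measure_pmf.expectation (walk_pmf \<theta> (Suc j)) (\<lambda>x. cos (t \<bullet> xr x))
      = measure_pmf.expectation (walk_pmf \<theta> j)
          (\<lambda>s. measure_pmf.expectation (map_pmf (\<lambda>y. s + y) \<theta>) (\<lambda>x. cos (t \<bullet> xr x)))"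
    by (simp only: walk_pmf.simps(2), rule integral_bind_pmf_bdd[where B=1]) simp
  also have "\<dots> = measure_pmf.expectation (walk_pmf \<theta> j) (\<lambda>s. cos (t \<bullet> xr s) * phi t)"
  proof (rule Bochner_Integration.integral_cong[OF refl])
    fix s
    have "measure_pmf.expectation (map_pmf (\<lambda>y. s + y) \<theta>) (\<lambda>x. cos (t \<bullet> xr x))
        = measure_pmf.expectation \<theta> (\<lambda>y. cos (t \<bullet> xr s) * cos (t \<bullet> xr y) - sin (t \<bullet> xr s) * sin (t \<bullet> xr y))"
      by (simp add: xr_add inner_add_right cos_add)
    also have "\<dots> = cos (t \<bullet> xr s) * phi t - sin (t \<bullet> xr s) * measure_pmf.expectation \<theta> (\<lambda>y. sin (t \<bullet> xr y))"
      unfolding phi_def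
      by (subst Bochner_Integration.integral_diff) (auto intro: int_cos int_sin)
    also have "measure_pmf.expectation \<theta> (\<lambda>y. sin (t \<bullet> xr y)) = 0"
      using sin_int_sym[of 1 t] by (simp only: walk_one)
    finally show "measure_pmf.expectation (map_pmf (\<lambda>y. s + y) \<theta>) (\<lambda>x. cos (t \<bullet> xr x))
        = cos (t \<bullet> xr s) * phi t" by simp
  qed
  also have "\<dots> = phi t ^ Suc j" using Suc by simp
  finally show ?case .
qed

lemma charf_shift: "measure_pmf.expectation (walk_pmf \<theta> j) (\<lambda>z. cos (t \<bullet> xr z - t \<bullet> xr y))
    = cos (t \<bullet> xr y) * phi t ^ j"
proof -
  have "measure_pmf.expectation (walk_pmf \<theta> j) (\<lambda>z. cos (t \<bullet> xr z - t \<bullet> xr y))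
      = measure_pmf.expectation (walk_pmf \<theta> j) (\<lambda>z. cos (t \<bullet> xr y) * cos (t \<bullet> xr z) + sin (t \<bullet> xr y) * sin (t \<bullet> xr z))"
    by (simp add: cos_diff mult_ac)
  also have "\<dots> = cos (t \<bullet> xr y) * phi t ^ j + sin (t \<bullet> xr y) * 0"
    by (subst Bochner_Integration.integral_add) (auto intro: int_cos int_sin simp: charf sin_int_sym)
  finally show ?thesis by simp
qed

lemma phi_unit_support:
  assumes u: "\<bar>phi t0\<bar> = 1"
  shows "\<forall>x\<in>set_pmf \<theta>. cos (t0 \<bullet> xr x) = phi t0 \<and> sin (t0 \<bullet> xr x) = 0"
proof
  fix x assume x: "x \<in> set_pmf \<theta>"
  define e where "e = phi t0"
  have e2: "e * e = 1"
  proof -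
    have "\<bar>e\<bar> * \<bar>e\<bar> = 1" using u unfolding e_def by simp
    then show ?thesis by (simp add: abs_mult_self_eq)
  qed
  have nn: "0 \<le> 1 - e * cos (t0 \<bullet> xr y)" for y
  proof -
    have "\<bar>e * cos (t0 \<bullet> xr y)\<bar> \<le> 1" using u unfolding e_def by (simp add: abs_mult)
    then show ?thesis by linarith
  qed
  have ecos: "\<bar>e * cos (t0 \<bullet> xr y)\<bar> \<le> 1" for y
    using u unfolding e_def by (simp add: abs_mult)
  have bd: "\<bar>1 - e * cos (t0 \<bullet> xr y)\<bar> \<le> 2" for y
  proof -
    have "\<bar>1 - e * cos (t0 \<bullet> xr y)\<bar> = 1 - e * cos (t0 \<bullet> xr y)" by (rule abs_of_nonneg[OF nn])
    moreover have "- (e * cos (t0 \<bullet> xr y)) \<le> 1" using ecos[of y] by linarith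
    ultimately show ?thesis by linarith
  qed
  have nn': "e * cos (t0 \<bullet> xr y) \<le> 1" for y
    using ecos[of y] abs_ge_self[of "e * cos (t0 \<bullet> xr y)"] by linarith
  have int1: "integrable (measure_pmf \<theta>) (\<lambda>y. 1 - e * cos (t0 \<bullet> xr y))"
    by (rule integrable_bdd_pmf[where B=2]) (rule bd)
  have "measure_pmf.expectation \<theta> (\<lambda>y. 1 - e * cos (t0 \<bullet> xr y)) = 1 - e * phi t0"
    unfolding phi_def by (subst Bochner_Integration.integral_diff) (auto intro: int_cos)
  also have "\<dots> = 0" using e2 by (simp add: e_def)
  finally have "AE y in measure_pmf \<theta>. 1 - e * cos (t0 \<bullet> xr y) = 0"
    by (subst (asm) integral_nonneg_eq_0_iff_AE) (auto intro!: int1 nn nn' AE_I2)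
  then have "e * cos (t0 \<bullet> xr x) = 1" using x by (simp add: AE_measure_pmf_iff)
  then have "e * (e * cos (t0 \<bullet> xr x)) = e" by simp
  then have c: "cos (t0 \<bullet> xr x) = e"
    using e2 by (simp add: mult.assoc[symmetric])
  moreover have "sin (t0 \<bullet> xr x) = 0"
  proof -
    have "(sin (t0 \<bullet> xr x))\<^sup>2 = 1 - (cos (t0 \<bullet> xr x))\<^sup>2" by (rule sin_squared_eq)
    also have "\<dots> = 0" using c e2 by (simp add: power2_eq_square)
    finally show ?thesis by simp
  qed
  ultimately show "cos (t0 \<bullet> xr x) = phi t0 \<and> sin (t0 \<bullet> xr x) = 0" by (simp add: e_def)
qed

lemma phi_shift:
  assumes u: "\<bar>phi t0\<bar> = 1"
  shows "phi (t0 + s) = phi t0 * phi s"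
proof -
  have "phi (t0 + s) = measure_pmf.expectation \<theta> (\<lambda>x. phi t0 * cos (s \<bullet> xr x))"
    unfolding phi_def
  proof (rule integral_cong_AE)
    show "AE x in measure_pmf \<theta>. cos ((t0 + s) \<bullet> xr x) = measure_pmf.expectation \<theta> (\<lambda>x. cos (t0 \<bullet> xr x)) * cos (s \<bullet> xr x)"
      using phi_unit_support[OF u] unfolding AE_measure_pmf_iff phi_def
      by (auto simp: inner_add_left cos_add)
  qed simp_all
  also have "\<dots> = phi t0 * phi s" by (simp add: phi_def)
  finally show ?thesis .
qed

lemma sigma_pos: "\<sigma>\<^sup>2 > 0"
proof (rule ccontr)
  assume "\<not> \<sigma>\<^sup>2 > 0"
  then have s0: "\<sigma>\<^sup>2 = 0" by (simp add: not_less)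
  have supp: "x = 0" if x: "x \<in> set_pmf \<theta>" for x
  proof -
    have "x $ i = 0" for i
    proof -
      have "measure_pmf.expectation \<theta> (\<lambda>x. real_of_int (x $ i) * real_of_int (x $ i)) = 0"
        using cov_int[of i i] s0 by simp
      then have "AE y in measure_pmf \<theta>. real_of_int (y $ i) * real_of_int (y $ i) = 0"
        by (subst (asm) integral_nonneg_eq_0_iff_AE) (auto intro: int_xij)
      then show ?thesis using x by (simp add: AE_measure_pmf_iff)
    qed
    then show ?thesis by (simp add: vec_eq_iff)
  qed
  have "add_subgroup {0::int^4}" unfolding add_subgroup_def by auto
  moreover have "{0::int^4} \<noteq> UNIV"
  proof
    assume "{0::int^4} = UNIV"
    then have "(1::int^4) = 0" by (metis UNIV_I singletonD)
    then show False by (simp add: vec_eq_iff)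
  qed
  moreover have "set_pmf \<theta> \<subseteq> {0}" using supp by auto
  ultimately have "\<exists>H. add_subgroup H \<and> H \<noteq> UNIV \<and> set_pmf \<theta> \<subseteq> H"
    by (intro exI[where x="{0}"]) simp
  then show False using not_strict_subgroup by simp
qed

end


context rw
begin

lemma phi_quad: "\<exists>c r. c > 0 \<and> r > 0 \<and>
   (\<forall>s. norm s < r \<longrightarrow> \<bar>phi s\<bar> \<le> 1 - c * (norm s)\<^sup>2 \<and> 0 \<le> 1 - c * (norm s)\<^sup>2)"
proof -
  define M where "M = measure_pmf.expectation \<theta> (\<lambda>x. znorm x ^ 4)"
  have M0: "M \<ge> 0" unfolding M_def by (rule integral_nonneg_AE) (simp add: znorm_xr)
  define S where "S = \<sigma>\<^sup>2"
  have S0: "S > 0" unfolding S_def by (rule sigma_pos)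
  define r where "r = min 1 (min (6 * S / (M + 1)) (1 / S))"
  have r0: "r > 0" unfolding r_def using S0 M0 by auto
  have main: "\<bar>phi s\<bar> \<le> 1 - S / 4 * (norm s)\<^sup>2 \<and> 0 \<le> 1 - S / 4 * (norm s)\<^sup>2" if ns: "norm s < r" for s
  proof -
    define n where "n = norm s"
    have n0: "n \<ge> 0" unfolding n_def by simp
    have n1: "n < 1" using ns unfolding n_def r_def by simp
    have n2le: "n\<^sup>2 \<le> n" using n0 n1 by (simp add: power2_eq_square mult_left_le_one_le)
    have nr: "n\<^sup>2 < r" using n2le ns unfolding n_def by linarith
    have nA: "n\<^sup>2 < 6 * S / (M + 1)" using nr unfolding r_def by simp
    have nB: "n\<^sup>2 < 1 / S" using nr unfolding r_def by simp
    have SnB: "S * n\<^sup>2 \<le> 1" using nB S0 by (simp add: field_simps)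
    have MnA: "M * n\<^sup>2 \<le> 6 * S"
    proof -
      have "(M + 1) * n\<^sup>2 \<le> 6 * S" using nA M0 by (simp add: field_simps)
      moreover have "M * n\<^sup>2 \<le> (M + 1) * n\<^sup>2" by (simp add: mult_right_mono)
      ultimately show ?thesis by linarith
    qed
    let ?A = "\<lambda>x. (s \<bullet> xr x)\<^sup>2" and ?B = "\<lambda>x. (s \<bullet> xr x) ^ 4"
    have iA: "integrable (measure_pmf \<theta>) ?A" using int_inner_pow[of 2 s] by simp
    have iB: "integrable (measure_pmf \<theta>) ?B" using int_inner_pow[of 4 s] by simp
    have iP: "integrable (measure_pmf \<theta>) (\<lambda>x. 1 - ?A x / 2 + ?B x / 24)"
      by (intro Bochner_Integration.integrable_add Bochner_Integration.integrable_diff integrable_divide iA iB measure_pmf.integrable_const)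
    have iQ: "integrable (measure_pmf \<theta>) (\<lambda>x. 1 - ?A x / 2)"
      by (intro Bochner_Integration.integrable_diff integrable_divide iA measure_pmf.integrable_const)
    have EA: "measure_pmf.expectation \<theta> ?A = S * n\<^sup>2"
      using second_moment[of s] unfolding S_def n_def .
    have EB: "measure_pmf.expectation \<theta> ?B \<le> n ^ 4 * M"
    proof -
      have "measure_pmf.expectation \<theta> ?B \<le> measure_pmf.expectation \<theta> (\<lambda>x. n ^ 4 * znorm x ^ 4)"
      proof (rule integral_mono[OF iB])
        show "integrable (measure_pmf \<theta>) (\<lambda>x. n ^ 4 * znorm x ^ 4)"
          using int_znorm_pow[of 4] by simp
        fix x
        have "\<bar>s \<bullet> xr x\<bar> \<le> n * znorm x"
          unfolding znorm_xr n_def by (rule Cauchy_Schwarz_ineq2)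
        then have "\<bar>s \<bullet> xr x\<bar> ^ 4 \<le> (n * znorm x) ^ 4"
          by (rule power_mono) simp
        then show "(s \<bullet> xr x) ^ 4 \<le> n ^ 4 * znorm x ^ 4"
          by (simp add: power_abs power_mult_distrib power_even_abs_numeral)
      qed
      also have "\<dots> = n ^ 4 * M" unfolding M_def by simp
      finally show ?thesis .
    qed
    have up: "phi s \<le> 1 - S * n\<^sup>2 / 2 + n ^ 4 * M / 24"
    proof -
      have "phi s \<le> measure_pmf.expectation \<theta> (\<lambda>x. 1 - ?A x / 2 + ?B x / 24)"
        unfolding phi_def
        by (rule integral_mono) (auto intro!: int_cos iP cos_le4)
      also have "\<dots> = 1 - measure_pmf.expectation \<theta> ?A / 2 + measure_pmf.expectation \<theta> ?B / 24"
        using iA iB by simp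
      finally show ?thesis using EA EB by simp
    qed
    have lo: "1 - S * n\<^sup>2 / 2 \<le> phi s"
    proof -
      have "measure_pmf.expectation \<theta> (\<lambda>x. 1 - ?A x / 2) \<le> phi s"
        unfolding phi_def
        by (rule integral_mono) (auto intro!: int_cos iQ cos_ge2)
      moreover have "measure_pmf.expectation \<theta> (\<lambda>x. 1 - ?A x / 2) = 1 - measure_pmf.expectation \<theta> ?A / 2"
        using iA by simp
      ultimately show ?thesis using EA by simp
    qed
    have q: "n ^ 4 * M / 24 \<le> S * n\<^sup>2 / 4"
    proof -
      have "n ^ 4 * M = n\<^sup>2 * (M * n\<^sup>2)" by (simp add: power2_eq_square eval_nat_numeral mult_ac)
      also have "\<dots> \<le> n\<^sup>2 * (6 * S)" by (rule mult_left_mono[OF MnA]) simp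
      finally show ?thesis by (simp add: mult_ac)
    qed
    have p0: "phi s \<ge> 0" using lo SnB by linarith
    have "phi s \<le> 1 - S * n\<^sup>2 / 4" using up q by linarith
    moreover have "S / 4 * n\<^sup>2 = S * n\<^sup>2 / 4" by simp
    ultimately have "\<bar>phi s\<bar> \<le> 1 - S / 4 * n\<^sup>2" using p0 by simp
    moreover have "0 \<le> 1 - S / 4 * n\<^sup>2" using SnB by simp
    ultimately show ?thesis unfolding n_def by simp
  qed
  show ?thesis
    by (rule exI[of _ "S / 4"], rule exI[of _ r]) (use S0 r0 main in auto)
qed

lemma unit_points:
  assumes u: "\<bar>phi t\<bar> = 1"
  shows "\<exists>n::int. t $ i = of_int n * pi"
proof -
  define H where "H = {x. cos (2 * (t \<bullet> xr x)) = 1}"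
  have sinH: "sin (2 * (t \<bullet> xr x)) = 0" if "x \<in> H" for x
  proof -
    have "(sin (2 * (t \<bullet> xr x)))\<^sup>2 = 1 - (cos (2 * (t \<bullet> xr x)))\<^sup>2" by (rule sin_squared_eq)
    then show ?thesis using that unfolding H_def by simp
  qed
  have "add_subgroup H"
    unfolding add_subgroup_def
  proof (intro conjI ballI)
    show "0 \<in> H" unfolding H_def by simp
    fix x y assume x: "x \<in> H" and y: "y \<in> H"
    have "cos (2 * (t \<bullet> xr (x - y))) = cos (2 * (t \<bullet> xr x) - 2 * (t \<bullet> xr y))"
      by (simp add: xr_diff inner_diff_right algebra_simps)
    also have "\<dots> = 1"
      using x y sinH[OF x] sinH[OF y] unfolding cos_diff H_def by simp
    finally show "x - y \<in> H" unfolding H_def by simp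
  qed
  moreover have "set_pmf \<theta> \<subseteq> H"
  proof
    fix x assume x: "x \<in> set_pmf \<theta>"
    have c: "cos (t \<bullet> xr x) = phi t" using phi_unit_support[OF u] x by blast
    have "(phi t)\<^sup>2 = 1" using u by (metis abs_power2 one_power2 power2_abs)
    then show "x \<in> H" unfolding H_def using c by (simp add: cos_double_cos)
  qed
  ultimately have HU: "H = UNIV" using not_strict_subgroup by blast
  have "axis i (1::int) \<in> H" using HU by simp
  moreover have "xr (axis i (1::int)) = axis i 1"
    by (simp add: vec_eq_iff axis_def)
  ultimately have "cos (2 * t $ i) = 1" unfolding H_def by (simp add: inner_axis)
  then obtain n :: int where "2 * t $ i = of_int n * 2 * pi" using cos_one_2pi_int by blast
  then have "t $ i = of_int n * pi" by simp
  then show ?thesis by blast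
qed

definition box :: "(real ^ 4) set" where "box = cbox 0 (\<chi> i. 2 * pi)"

definition Bad :: "(real ^ 4) set" where "Bad = {t0 \<in> box. \<bar>phi t0\<bar> = 1}"

lemma Bad_coords: "t \<in> Bad \<Longrightarrow> t $ i \<in> {0, pi, 2 * pi}"
proof -
  assume t: "t \<in> Bad"
  then have u: "\<bar>phi t\<bar> = 1" and tb: "0 \<le> t $ i" "t $ i \<le> 2 * pi"
    by (auto simp: Bad_def box_def mem_box_cart)
  obtain n :: int where n: "t $ i = of_int n * pi" using unit_points[OF u] by blast
  have "0 \<le> of_int n * pi" "of_int n * pi \<le> 2 * pi" using tb n by auto
  then have "0 \<le> n" "n \<le> 2" using pi_gt_zero
    by (auto simp: zero_le_mult_iff mult_le_cancel_right)
  then have "n = 0 \<or> n = 1 \<or> n = 2" by auto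
  then show ?thesis using n by auto
qed

lemma Bad_finite: "finite Bad"
proof (rule finite_subset)
  show "Bad \<subseteq> vec_lambda ` (PiE UNIV (\<lambda>_. {0, pi, 2 * pi}))"
  proof
    fix t assume t: "t \<in> Bad"
    have "(\<lambda>i. t $ i) \<in> PiE UNIV (\<lambda>_. {0, pi, 2 * pi})" using Bad_coords[OF t] by auto
    moreover have "t = vec_lambda (\<lambda>i. t $ i)" by simp
    ultimately show "t \<in> vec_lambda ` (PiE UNIV (\<lambda>_. {0, pi, 2 * pi}))" by blast
  qed
  show "finite (vec_lambda ` (PiE UNIV (\<lambda>_. {0, pi, 2 * pi})))"
    by (intro finite_imageI finite_PiE) auto
qed

lemma cos_diff_le2: "\<bar>cos a - cos b\<bar> \<le> (2::real)"
proof -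
  have "\<bar>cos a - cos b\<bar> \<le> \<bar>cos a\<bar> + \<bar>cos b\<bar>" by (simp add: abs_triangle_ineq4)
  with abs_cos_le_one[of a] abs_cos_le_one[of b] show ?thesis by linarith
qed

lemma phi_lip: "\<bar>phi t - phi t'\<bar> \<le> measure_pmf.expectation \<theta> znorm * norm (t - t')"
proof -
  have iz: "integrable (measure_pmf \<theta>) znorm" using int_znorm_pow[of 1] by simp
  have "\<bar>phi t - phi t'\<bar> = \<bar>measure_pmf.expectation \<theta> (\<lambda>x. cos (t \<bullet> xr x) - cos (t' \<bullet> xr x))\<bar>"
    unfolding phi_def by (simp add: int_cos)
  also have "\<dots> \<le> measure_pmf.expectation \<theta> (\<lambda>x. \<bar>cos (t \<bullet> xr x) - cos (t' \<bullet> xr x)\<bar>)"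
    using integral_norm_bound[of "measure_pmf \<theta>" "\<lambda>x. cos (t \<bullet> xr x) - cos (t' \<bullet> xr x)"] by simp
  also have "\<dots> \<le> measure_pmf.expectation \<theta> (\<lambda>x. norm (t - t') * znorm x)"
  proof (rule integral_mono)
    show "integrable (measure_pmf \<theta>) (\<lambda>x. \<bar>cos (t \<bullet> xr x) - cos (t' \<bullet> xr x)\<bar>)"
      by (rule integrable_bdd_pmf[where B=2]) (simp add: cos_diff_le2)
    show "integrable (measure_pmf \<theta>) (\<lambda>x. norm (t - t') * znorm x)" using iz by simp
    fix x
    have "\<bar>cos (t \<bullet> xr x) - cos (t' \<bullet> xr x)\<bar> \<le> \<bar>t \<bullet> xr x - t' \<bullet> xr x\<bar>" by (rule abs_cos_diff)
    also have "\<dots> = \<bar>(t - t') \<bullet> xr x\<bar>" by (simp add: inner_diff_left)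
    also have "\<dots> \<le> norm (t - t') * znorm x" unfolding znorm_xr by (rule Cauchy_Schwarz_ineq2)
    finally show "\<bar>cos (t \<bullet> xr x) - cos (t' \<bullet> xr x)\<bar> \<le> norm (t - t') * znorm x" .
  qed
  also have "\<dots> = measure_pmf.expectation \<theta> znorm * norm (t - t')" by simp
  finally show ?thesis .
qed

lemma phi_cont: "continuous_on A phi"
proof (rule lipschitz_on_continuous_on)
  show "(measure_pmf.expectation \<theta> znorm)-lipschitz_on A phi"
  proof (rule lipschitz_onI)
    fix t t' show "dist (phi t) (phi t') \<le> measure_pmf.expectation \<theta> znorm * dist t t'"
      using phi_lip[of t t'] by (simp add: dist_real_def dist_norm)
    show "0 \<le> measure_pmf.expectation \<theta> znorm"
      by (rule integral_nonneg_AE) (simp add: znorm_xr)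
  qed
qed

lemma delta_exists:
  assumes r: "r > 0"
  shows "\<exists>\<delta>>0. \<delta> \<le> 1 \<and> (\<forall>t\<in>box. (\<forall>t0\<in>Bad. r \<le> dist t t0) \<longrightarrow> \<bar>phi t\<bar> \<le> 1 - \<delta>)"
proof -
  define K where "K = box - (\<Union>t0\<in>Bad. ball t0 r)"
  have cK: "compact K" unfolding K_def box_def
    by (intro compact_diff compact_cbox open_UN ballI open_ball)
  have inK: "t \<in> K" if "t \<in> box" "\<forall>t0\<in>Bad. r \<le> dist t t0" for t
    using that unfolding K_def by (auto simp: dist_commute)
  show ?thesis
  proof (cases "K = {}")
    case True
    then show ?thesis using inK by (intro exI[of _ "1/2"]) auto
  next
    case False
    have "continuous_on K (\<lambda>t. \<bar>phi t\<bar>)" by (intro continuous_on_rabs phi_cont)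
    then obtain ts where ts: "ts \<in> K" and mx: "\<And>t. t \<in> K \<Longrightarrow> \<bar>phi t\<bar> \<le> \<bar>phi ts\<bar>"
      using continuous_attains_sup[OF cK False] by blast
    have "\<bar>phi ts\<bar> < 1"
    proof (rule ccontr)
      assume "\<not> \<bar>phi ts\<bar> < 1"
      then have "\<bar>phi ts\<bar> = 1" using phi_abs_le[of ts] by linarith
      moreover have "ts \<in> box" using ts unfolding K_def by auto
      ultimately have "ts \<in> Bad" unfolding Bad_def by auto
      then have "ts \<in> (\<Union>t0\<in>Bad. ball t0 r)" using r by (intro UN_I[of ts]) auto
      then show False using ts unfolding K_def by auto
    qed
    then show ?thesis using inK mx phi_abs_le[of ts]
      by (intro exI[of _ "1 - \<bar>phi ts\<bar>"]) force
  qed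
qed

end


lemma exp_i2pi: "exp (\<i> * of_real (of_int q * 2 * pi)) = 1"
  unfolding exp_eq_1 by (intro conjI exI[of _ q]) simp_all

lemma char1:
  fixes w :: int and N :: nat
  assumes N: "N > 0"
  shows "(\<Sum>m<N. exp (\<i> * of_real (2 * pi * real m * of_int w / real N))) = (if int N dvd w then of_nat N else 0)"
proof -
  define z where "z = exp (\<i> * of_real (2 * pi * of_int w / real N))"
  have zm: "exp (\<i> * of_real (2 * pi * real m * of_int w / real N)) = z ^ m" for m
  proof -
    have "\<i> * complex_of_real (2 * pi * real m * of_int w / real N) = of_nat m * (\<i> * of_real (2 * pi * of_int w / real N))"
      by (simp add: field_simps)
    then show ?thesis unfolding z_def by (simp only: exp_of_nat_mult)
  qed
  have sz: "(\<Sum>m<N. exp (\<i> * of_real (2 * pi * real m * of_int w / real N))) = (\<Sum>m<N. z ^ m)"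
    by (simp only: zm)
  show ?thesis
  proof (cases "int N dvd w")
    case True
    then obtain q where q: "w = int N * q" by (auto elim: dvdE)
    have "z = exp (\<i> * of_real (of_int q * 2 * pi))"
      unfolding z_def q using N by (simp add: field_simps)
    also have "\<dots> = 1" by (rule exp_i2pi)
    finally have "z = 1" .
    then show ?thesis using True unfolding sz by simp
  next
    case False
    have zN: "z ^ N = 1"
    proof -
      have "z ^ N = exp (of_nat N * (\<i> * of_real (2 * pi * of_int w / real N)))"
        unfolding z_def by (simp only: exp_of_nat_mult)
      also have "\<dots> = exp (\<i> * of_real (of_int w * 2 * pi))" using N by (simp add: field_simps)
      also have "\<dots> = 1" by (rule exp_i2pi)
      finally show ?thesis .
    qed
    have z1: "z \<noteq> 1"
    proof
      assume "z = 1"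
      then obtain n :: int where n: "Im (\<i> * of_real (2 * pi * of_int w / real N)) = of_int (2 * n) * pi"
        unfolding z_def exp_eq_1 by blast
      then have "2 * pi * of_int w / real N = of_int (2 * n) * pi" by simp
      then have "real_of_int w = real N * of_int n" using N by (simp add: field_simps)
      then have "w = int N * n" by (metis of_int_eq_iff of_int_mult of_int_of_nat_eq)
      then show False using False by simp
    qed
    have "(\<Sum>m<N. z ^ m) = 0" using zN z1 by (simp add: sum_gp_strict)
    then show ?thesis using False unfolding sz by simp
  qed
qed

definition grid :: "nat \<Rightarrow> (4 \<Rightarrow> nat) set" where "grid N = PiE UNIV (\<lambda>_. {..<N})"
definition tk :: "nat \<Rightarrow> (4 \<Rightarrow> nat) \<Rightarrow> real ^ 4" where "tk N k = (\<chi> i. 2 * pi * real (k i) / real N)"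

lemma finite_grid: "finite (grid N)" unfolding grid_def by (intro finite_PiE) auto

lemma card_grid: "card (grid N) = N ^ 4" unfolding grid_def by (simp add: card_PiE)

lemma char4:
  assumes N: "N > 0"
  shows "(\<Sum>k\<in>grid N. cos (tk N k \<bullet> xr w)) = (if \<forall>i. int N dvd w $ i then real N ^ 4 else 0)"
proof -
  define f where "f i m = exp (\<i> * of_real (2 * pi * real m * of_int (w $ i) / real N))" for i m
  have "cos (tk N k \<bullet> xr w) = Re (\<Prod>i\<in>UNIV. f i (k i))" for k
  proof -
    have "(\<Prod>i\<in>UNIV. f i (k i)) = exp (\<Sum>i\<in>UNIV. \<i> * of_real (2 * pi * real (k i) * of_int (w $ i) / real N))"
      unfolding f_def by (simp add: exp_sum)
    also have "(\<Sum>i\<in>UNIV. \<i> * of_real (2 * pi * real (k i) * of_int (w $ i) / real N))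
        = \<i> * of_real (tk N k \<bullet> xr w)"
      by (simp add: tk_def inner_vec_def sum_distrib_left)
    finally show ?thesis by (simp add: Re_exp)
  qed
  then have "(\<Sum>k\<in>grid N. cos (tk N k \<bullet> xr w)) = Re (\<Sum>k\<in>grid N. \<Prod>i\<in>UNIV. f i (k i))"
    by (simp add: Re_sum)
  also have "(\<Sum>k\<in>grid N. \<Prod>i\<in>UNIV. f i (k i)) = (\<Prod>i\<in>UNIV. \<Sum>m<N. f i m)"
    unfolding grid_def by (rule prod_sum_PiE[symmetric]) auto
  also have "\<dots> = (\<Prod>i\<in>UNIV. if int N dvd w $ i then of_nat N else 0)"
    unfolding f_def using char1[OF N] by simp
  also have "\<dots> = (if \<forall>i. int N dvd w $ i then of_nat N ^ 4 else 0)"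
  proof (cases "\<forall>i. int N dvd w $ i")
    case True
    then show ?thesis by simp
  next
    case False
    then obtain i where "\<not> int N dvd w $ i" by blast
    then show ?thesis by (simp add: prod_zero_iff) blast
  qed
  finally show ?thesis by auto
qed

lemma tail_sq:
  assumes m1: "m \<ge> 1" and mN: "m \<le> N"
  shows "(\<Sum>n\<in>{Suc m..N}. 1 / (real n)\<^sup>2) \<le> 1 / real m - 1 / real N"
  using mN
proof (induction N rule: dec_induct)
  case base
  then show ?case by simp
next
  case (step N)
  have N1: "real N \<ge> 1" using step.hyps m1 by simp
  have A: "(\<Sum>n\<in>{Suc m..Suc N}. 1 / (real n)\<^sup>2) = 1 / (real (Suc N))\<^sup>2 + (\<Sum>n\<in>{Suc m..N}. 1 / (real n)\<^sup>2)"
    using step.hyps by (simp add: atLeastAtMostSuc_conv)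
  have C: "1 / (real (Suc N))\<^sup>2 \<le> 1 / real N - 1 / real (Suc N)"
  proof -
    have e: "real (Suc N) = real N + 1" by simp
    have "1 / real N - 1 / (real N + 1) = 1 / (real N * (real N + 1))"
      using N1 by (simp add: field_simps)
    moreover have "1 / (real N + 1)\<^sup>2 \<le> 1 / (real N * (real N + 1))"
      using N1 by (intro divide_left_mono) (auto simp: power2_eq_square intro!: mult_right_mono)
    ultimately show ?thesis unfolding e by linarith
  qed
  show ?case using A C step.IH by linarith
qed

lemma exp_neg_le_inv: "x > 0 \<Longrightarrow> exp (- x) \<le> 1 / (x::real)"
proof -
  assume x: "x > 0"
  have "x \<le> exp x" using exp_ge_add_one_self[of x] by linarith
  then show ?thesis using x by (simp add: exp_minus field_simps)
qed

lemma gsum: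
  assumes b: "\<beta> > 0"
  shows "(\<Sum>n\<le>N. exp (- \<beta> * (real n)\<^sup>2)) \<le> 2 + 2 / sqrt \<beta>"
proof -
  define x where "x = 1 / sqrt \<beta>"
  have x0: "x > 0" unfolding x_def using b by simp
  have sb: "sqrt \<beta> > 0" using b by simp
  define K where "K = nat \<lfloor>x\<rfloor>"
  have fl0: "0 \<le> \<lfloor>x\<rfloor>" using x0 by simp
  have rK: "real K = of_int \<lfloor>x\<rfloor>" unfolding K_def using fl0 by simp
  have K1: "real K \<le> x" using rK by simp
  have K2: "x < real K + 1" using rK by linarith
  let ?f = "\<lambda>n. exp (- \<beta> * (real n)\<^sup>2)"
  have "(\<Sum>n\<le>N. ?f n) \<le> (\<Sum>n\<in>{..Suc K} \<union> {Suc (Suc K)..N}. ?f n)"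
    by (rule sum_mono2) auto
  also have "\<dots> = (\<Sum>n\<le>Suc K. ?f n) + (\<Sum>n\<in>{Suc (Suc K)..N}. ?f n)"
    by (rule sum.union_disjoint) auto
  also have "(\<Sum>n\<le>Suc K. ?f n) \<le> real (card {..Suc K}) * 1"
    by (rule sum_bounded_above) (use b in simp)
  also have "(\<Sum>n\<in>{Suc (Suc K)..N}. ?f n) \<le> 1 / (\<beta> * (real K + 1))"
  proof (cases "Suc K \<le> N")
    case True
    have "(\<Sum>n\<in>{Suc (Suc K)..N}. ?f n) \<le> (\<Sum>n\<in>{Suc (Suc K)..N}. (1 / \<beta>) * (1 / (real n)\<^sup>2))"
    proof (rule sum_mono)
      fix n assume n: "n \<in> {Suc (Suc K)..N}"
      then have "real n > 0" by simp
      then have "\<beta> * (real n)\<^sup>2 > 0" using b by simp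
      then have "exp (- (\<beta> * (real n)\<^sup>2)) \<le> 1 / (\<beta> * (real n)\<^sup>2)" by (rule exp_neg_le_inv)
      then show "?f n \<le> (1 / \<beta>) * (1 / (real n)\<^sup>2)" by simp
    qed
    also have "\<dots> = (1 / \<beta>) * (\<Sum>n\<in>{Suc (Suc K)..N}. 1 / (real n)\<^sup>2)"
      by (simp add: sum_distrib_left)
    also have "\<dots> \<le> (1 / \<beta>) * (1 / real (Suc K) - 1 / real N)"
      using b by (intro mult_left_mono tail_sq True) auto
    also have "\<dots> \<le> (1 / \<beta>) * (1 / real (Suc K))"
      using b True by (intro mult_left_mono) auto
    also have "\<dots> = 1 / (\<beta> * (real K + 1))" by simp
    finally show ?thesis .
  next
    case False
    then have "{Suc (Suc K)..N} = {}" by auto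
    then show ?thesis using b by simp
  qed
  also have "1 / (\<beta> * (real K + 1)) \<le> 1 / sqrt \<beta>"
  proof -
    have "sqrt \<beta> * x = 1" unfolding x_def using b by simp
    then have "1 \<le> sqrt \<beta> * (real K + 1)"
      using K2 sb by (metis less_imp_le mult_less_cancel_left_pos)
    then have "sqrt \<beta> * 1 \<le> sqrt \<beta> * (sqrt \<beta> * (real K + 1))"
      using sb by (intro mult_left_mono) auto
    then have sK: "sqrt \<beta> \<le> \<beta> * (real K + 1)" using b by (simp add: mult.assoc[symmetric])
    have "0 < \<beta> * (real K + 1) * sqrt \<beta>" using b sb by simp
    then show ?thesis using sK by (intro divide_left_mono) auto
  qed
  finally have "(\<Sum>n\<le>N. ?f n) \<le> real (card {..Suc K}) * 1 + 1 / sqrt \<beta>" by simp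
  moreover have "real (card {..Suc K}) = real K + 2" by simp
  ultimately show ?thesis using K1 unfolding x_def by simp
qed

lemma shift1:
  assumes c: "c \<le> N"
  shows "(\<Sum>m<N. exp (- \<beta> * (real m - real c)\<^sup>2)) \<le> 2 * (\<Sum>n\<le>N. exp (- \<beta> * (real n)\<^sup>2))"
proof -
  let ?f = "\<lambda>m. exp (- \<beta> * (real m - real c)\<^sup>2)" and ?g = "\<lambda>n. exp (- \<beta> * (real n)\<^sup>2)"
  have "(\<Sum>m<N. ?f m) = (\<Sum>m\<in>{m. m < N \<and> c \<le> m} \<union> {m. m < N \<and> m < c}. ?f m)"
    by (rule sum.cong) auto
  also have "\<dots> = (\<Sum>m\<in>{m. m < N \<and> c \<le> m}. ?f m) + (\<Sum>m\<in>{m. m < N \<and> m < c}. ?f m)"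
    by (rule sum.union_disjoint) auto
  also have "(\<Sum>m\<in>{m. m < N \<and> c \<le> m}. ?f m) \<le> (\<Sum>n\<le>N. ?g n)"
  proof (rule sum_le_included[where i="\<lambda>n. n + c"])
    show "\<forall>x\<in>{m. m < N \<and> c \<le> m}. \<exists>y\<in>{..N}. y + c = x \<and> ?f x \<le> ?g y"
    proof
      fix x assume x: "x \<in> {m. m < N \<and> c \<le> m}"
      then have e: "real x - real c = real (x - c)" by simp
      have "x - c \<in> {..N}" using x by auto
      moreover have "(x - c) + c = x" using x by auto
      moreover have "?f x \<le> ?g (x - c)" by (simp only: e order.refl)
      ultimately show "\<exists>y\<in>{..N}. y + c = x \<and> ?f x \<le> ?g y" by blast
    qed
  qed auto
  also have "(\<Sum>m\<in>{m. m < N \<and> m < c}. ?f m) \<le> (\<Sum>n\<le>N. ?g n)"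
  proof (rule sum_le_included[where i="\<lambda>n. c - n"])
    show "\<forall>x\<in>{m. m < N \<and> m < c}. \<exists>y\<in>{..N}. c - y = x \<and> ?f x \<le> ?g y"
    proof
      fix x assume x: "x \<in> {m. m < N \<and> m < c}"
      then have e: "(real x - real c)\<^sup>2 = (real (c - x))\<^sup>2" by (simp add: power2_commute of_nat_diff)
      have "c - x \<in> {..N}" using x c by auto
      moreover have "c - (c - x) = x" using x by auto
      moreover have "?f x \<le> ?g (c - x)" by (simp only: e order.refl)
      ultimately show "\<exists>y\<in>{..N}. c - y = x \<and> ?f x \<le> ?g y" by blast
    qed
  qed auto
  finally show ?thesis by simp
qed

lemma gauss1:
  assumes N: "N > 0" and b: "b > 0" and Nb: "real N \<ge> 4 * sqrt b" and c: "c \<le> N"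
  shows "(\<Sum>m<N. exp (- b * (2 * pi * real m / real N - 2 * pi * real c / real N)\<^sup>2)) \<le> 2 * real N / sqrt b"
proof -
  define \<beta> where "\<beta> = b * (2 * pi / real N)\<^sup>2"
  have \<beta>0: "\<beta> > 0" unfolding \<beta>_def using b N by simp
  have sb: "sqrt b > 0" using b by simp
  have eq: "- b * (2 * pi * real m / real N - 2 * pi * real c / real N)\<^sup>2 = - \<beta> * (real m - real c)\<^sup>2" for m
    unfolding \<beta>_def using N by (simp add: field_simps power2_eq_square)
  have "(\<Sum>m<N. exp (- b * (2 * pi * real m / real N - 2 * pi * real c / real N)\<^sup>2))
      = (\<Sum>m<N. exp (- \<beta> * (real m - real c)\<^sup>2))" by (simp only: eq)
  also have "\<dots> \<le> 2 * (\<Sum>n\<le>N. exp (- \<beta> * (real n)\<^sup>2))" by (rule shift1[OF c])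
  also have "\<dots> \<le> 2 * (2 + 2 / sqrt \<beta>)" by (rule mult_left_mono[OF gsum[OF \<beta>0]]) simp
  also have "sqrt \<beta> = sqrt b * (2 * pi / real N)"
    unfolding \<beta>_def using N by (simp add: real_sqrt_mult)
  also have "2 * (2 + 2 / (sqrt b * (2 * pi / real N))) = 4 + (2 / pi) * (real N / sqrt b)"
    using N sb by (simp add: field_simps)
  also have "\<dots> \<le> real N / sqrt b + 1 * (real N / sqrt b)"
  proof (rule add_mono)
    show "4 \<le> real N / sqrt b" using Nb sb by (simp add: field_simps)
    show "2 / pi * (real N / sqrt b) \<le> 1 * (real N / sqrt b)"
      using pi_ge_two N sb by (intro mult_right_mono) (auto simp: field_simps)
  qed
  finally show ?thesis by simp
qed

lemma gauss4:
  assumes N: "N > 0" and Ne: "even N" and b: "b > 0" and Nb: "real N \<ge> 4 * sqrt b"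
    and t0: "\<And>i. t0 $ i \<in> {0, pi, 2 * pi}"
  shows "(\<Sum>k\<in>grid N. exp (- b * (norm (tk N k - t0))\<^sup>2)) \<le> real N ^ 4 * (16 / b\<^sup>2)"
proof -
  have cex: "\<exists>c\<le>N. t0 $ i = 2 * pi * real c / real N" for i
  proof -
    from t0[of i] consider "t0 $ i = 0" | "t0 $ i = pi" | "t0 $ i = 2 * pi" by auto
    then show ?thesis
    proof cases
      case 1 then show ?thesis by (intro exI[of _ 0]) simp
    next
      case 2
      have "2 * pi * real (N div 2) / real N = pi"
        using Ne N by (auto elim!: evenE simp: field_simps)
      then show ?thesis using 2 by (intro exI[of _ "N div 2"]) auto
    next
      case 3 then show ?thesis using N by (intro exI[of _ N]) simp
    qed
  qed
  then obtain cc where cc: "\<And>i. cc i \<le> N" "\<And>i. t0 $ i = 2 * pi * real (cc i) / real N"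
    by metis
  define g where "g i m = exp (- b * (2 * pi * real m / real N - 2 * pi * real (cc i) / real N)\<^sup>2)" for i m
  have sb: "sqrt b > 0" using b by simp
  have "exp (- b * (norm (tk N k - t0))\<^sup>2) = (\<Prod>i\<in>UNIV. g i (k i))" for k
  proof -
    have "(norm (tk N k - t0))\<^sup>2 = (\<Sum>i\<in>UNIV. (2 * pi * real (k i) / real N - 2 * pi * real (cc i) / real N)\<^sup>2)"
      unfolding power2_norm_eq_inner inner_vec_def by (simp add: tk_def cc(2) power2_eq_square)
    then have "- b * (norm (tk N k - t0))\<^sup>2 = (\<Sum>i\<in>UNIV. - b * (2 * pi * real (k i) / real N - 2 * pi * real (cc i) / real N)\<^sup>2)"
      by (simp add: sum_distrib_left)
    then show ?thesis unfolding g_def by (simp add: exp_sum)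
  qed
  then have "(\<Sum>k\<in>grid N. exp (- b * (norm (tk N k - t0))\<^sup>2)) = (\<Sum>k\<in>grid N. \<Prod>i\<in>UNIV. g i (k i))"
    by simp
  also have "\<dots> = (\<Prod>i\<in>UNIV. \<Sum>m<N. g i m)"
    unfolding grid_def by (rule prod_sum_PiE[symmetric]) auto
  also have "\<dots> \<le> (\<Prod>i\<in>(UNIV::4 set). 2 * real N / sqrt b)"
  proof (rule prod_mono)
    fix i
    have gi: "(\<Sum>m<N. g i m) \<le> 2 * real N / sqrt b"
      unfolding g_def by (rule gauss1[OF N b Nb cc(1)])
    have "0 \<le> (\<Sum>m<N. g i m)" by (rule sum_nonneg) (simp add: g_def)
    then show "0 \<le> (\<Sum>m<N. g i m) \<and> (\<Sum>m<N. g i m) \<le> 2 * real N / sqrt b" using gi by simp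
  qed
  also have "\<dots> = (2 * real N / sqrt b) ^ 4" by simp
  also have "\<dots> = real N ^ 4 * (16 / b\<^sup>2)"
  proof -
    have "sqrt b ^ 4 = (sqrt b ^ 2) ^ 2" by (simp flip: power_mult)
    also have "\<dots> = b\<^sup>2" using b by simp
    finally have "sqrt b ^ 4 = b\<^sup>2" .
    then show ?thesis using sb by (simp add: power_divide power_mult_distrib)
  qed
  finally show ?thesis .
qed



lemma bern_decay:
  fixes \<delta> :: real
  assumes d0: "0 < \<delta>" and d1: "\<delta> \<le> 1" and j: "j \<ge> 1"
  shows "(1 - \<delta>) ^ j \<le> 4 / (\<delta>\<^sup>2 * (real j)\<^sup>2)"
proof -
  define a where "a = 1 + \<delta> / 2"
  have a1: "a \<ge> 1" unfolding a_def using d0 by simp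
  have B: "1 + real j * (\<delta> / 2) \<le> a ^ j"
    unfolding a_def by (rule Bernoulli_inequality) (use d0 in simp)
  have p: "(1 - \<delta>) * a\<^sup>2 \<le> 1"
  proof -
    have "(1 - \<delta>) * a\<^sup>2 = 1 - 3 * \<delta>\<^sup>2 / 4 - \<delta> ^ 3 / 4"
      unfolding a_def power2_eq_square power3_eq_cube by (simp add: field_simps)
    moreover have "0 \<le> 3 * \<delta>\<^sup>2 / 4 + \<delta> ^ 3 / 4" using d0 by simp
    ultimately show ?thesis by linarith
  qed
  have "(1 - \<delta>) ^ j * (a ^ j)\<^sup>2 = ((1 - \<delta>) * a\<^sup>2) ^ j"
    by (simp add: power_mult_distrib power_mult[symmetric] mult.commute)
  also have "\<dots> \<le> 1 ^ j"
    using p d1 by (intro power_mono) (auto simp: a_def)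
  finally have q: "(1 - \<delta>) ^ j * (a ^ j)\<^sup>2 \<le> 1" by simp
  have aj: "a ^ j > 0" using a1 by simp
  have pos: "0 < (a ^ j)\<^sup>2" using aj by (rule zero_less_power)
  have "(1 - \<delta>) ^ j \<le> 1 / (a ^ j)\<^sup>2" by (subst pos_le_divide_eq[OF pos]) (rule q)
  also have "\<dots> \<le> 1 / (real j * (\<delta> / 2))\<^sup>2"
  proof (rule divide_left_mono)
    have "real j * (\<delta> / 2) \<le> a ^ j" using B by linarith
    then show "(real j * (\<delta> / 2))\<^sup>2 \<le> (a ^ j)\<^sup>2"
      using d0 j by (intro power_mono) auto
    have "0 < real j * (\<delta> / 2)" using d0 j by simp
    then show "0 < (a ^ j)\<^sup>2 * (real j * (\<delta> / 2))\<^sup>2" using aj a1 d0 j by (intro mult_pos_pos zero_less_power) auto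
  qed simp
  also have "\<dots> = 4 / (\<delta>\<^sup>2 * (real j)\<^sup>2)" by (simp add: power2_eq_square field_simps)
  finally show ?thesis .
qed

context rw
begin

lemma tk_box: "N > 0 \<Longrightarrow> k \<in> grid N \<Longrightarrow> tk N k \<in> box"
  unfolding box_def mem_box_cart grid_def tk_def
  by (auto simp: field_simps PiE_iff) (metis less_imp_le_nat)

lemma pmf_le_grid:
  assumes N: "N > 0"
  shows "pmf (walk_pmf \<theta> j) y \<le> (\<Sum>k\<in>grid N. \<bar>phi (tk N k)\<bar> ^ j) / real N ^ 4"
proof -
  let ?W = "measure_pmf (walk_pmf \<theta> j)"
  have "real N ^ 4 * pmf (walk_pmf \<theta> j) y = integral\<^sup>L ?W (\<lambda>z. real N ^ 4 * indicator {y} z)"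
    by (simp add: measure_pmf_single)
  also have "\<dots> \<le> integral\<^sup>L ?W (\<lambda>z. \<Sum>k\<in>grid N. cos (tk N k \<bullet> xr (z - y)))"
  proof (rule integral_mono)
    show "integrable ?W (\<lambda>z. real N ^ 4 * indicator {y} z)"
      by (rule integrable_bdd_pmf[where B="real N ^ 4"]) (simp split: split_indicator)
    show "integrable ?W (\<lambda>z. \<Sum>k\<in>grid N. cos (tk N k \<bullet> xr (z - y)))"
      by (intro Bochner_Integration.integrable_sum integrable_bdd_pmf[where B=1]) simp
    fix z
    show "real N ^ 4 * indicator {y} z \<le> (\<Sum>k\<in>grid N. cos (tk N k \<bullet> xr (z - y)))"
      unfolding char4[OF N] by (auto split: split_indicator)
  qed
  also have "\<dots> = (\<Sum>k\<in>grid N. integral\<^sup>L ?W (\<lambda>z. cos (tk N k \<bullet> xr z - tk N k \<bullet> xr y)))"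
    by (subst Bochner_Integration.integral_sum)
       (auto intro: integrable_bdd_pmf[where B=1] simp: xr_diff inner_diff_right)
  also have "\<dots> = (\<Sum>k\<in>grid N. cos (tk N k \<bullet> xr y) * phi (tk N k) ^ j)"
    by (simp add: charf_shift)
  also have "\<dots> \<le> (\<Sum>k\<in>grid N. \<bar>phi (tk N k)\<bar> ^ j)"
  proof (rule sum_mono)
    fix k
    have "cos (tk N k \<bullet> xr y) * phi (tk N k) ^ j \<le> \<bar>cos (tk N k \<bullet> xr y) * phi (tk N k) ^ j\<bar>"
      by simp
    also have "\<dots> = \<bar>cos (tk N k \<bullet> xr y)\<bar> * \<bar>phi (tk N k)\<bar> ^ j" by (simp add: abs_mult power_abs)
    also have "\<dots> \<le> 1 * \<bar>phi (tk N k)\<bar> ^ j" by (intro mult_right_mono) auto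
    finally show "cos (tk N k \<bullet> xr y) * phi (tk N k) ^ j \<le> \<bar>phi (tk N k)\<bar> ^ j" by simp
  qed
  finally show ?thesis using N by (simp add: field_simps)
qed

lemma pointwise:
  assumes c: "c > 0" and r: "r > 0"
    and quad: "\<forall>s. norm s < r \<longrightarrow> \<bar>phi s\<bar> \<le> 1 - c * (norm s)\<^sup>2 \<and> 0 \<le> 1 - c * (norm s)\<^sup>2"
    and d: "\<delta> > 0" "\<delta> \<le> 1" and dd: "\<forall>t\<in>box. (\<forall>t0\<in>Bad. r \<le> dist t t0) \<longrightarrow> \<bar>phi t\<bar> \<le> 1 - \<delta>"
    and t: "t \<in> box"
  shows "\<bar>phi t\<bar> ^ j \<le> (1 - \<delta>) ^ j + (\<Sum>t0\<in>Bad. exp (- (c * real j) * (norm (t - t0))\<^sup>2))"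
proof -
  have nn: "0 \<le> (\<Sum>t0\<in>Bad. exp (- (c * real j) * (norm (t - t0))\<^sup>2))" by (rule sum_nonneg) simp
  have d0: "0 \<le> (1 - \<delta>) ^ j" using d by simp
  show ?thesis
  proof (cases "\<exists>t0\<in>Bad. dist t t0 < r")
    case True
    then obtain t0 where t0: "t0 \<in> Bad" "dist t t0 < r" by blast
    have u: "\<bar>phi t0\<bar> = 1" using t0 unfolding Bad_def by simp
    have "phi t = phi t0 * phi (t - t0)" using phi_shift[OF u, of "t - t0"] by simp
    then have eq: "\<bar>phi t\<bar> = \<bar>phi (t - t0)\<bar>" using u by (simp add: abs_mult)
    have ns: "norm (t - t0) < r" using t0 by (simp add: dist_norm)
    have "\<bar>phi t\<bar> \<le> 1 - c * (norm (t - t0))\<^sup>2" using quad ns eq by simp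
    also have "\<dots> \<le> exp (- (c * (norm (t - t0))\<^sup>2))"
      using exp_ge_add_one_self[of "- (c * (norm (t - t0))\<^sup>2)"] by simp
    finally have "\<bar>phi t\<bar> ^ j \<le> exp (- (c * (norm (t - t0))\<^sup>2)) ^ j"
      by (intro power_mono) simp_all
    also have "\<dots> = exp (- (c * real j) * (norm (t - t0))\<^sup>2)"
      by (simp add: exp_of_nat_mult[symmetric] mult_ac)
    also have "\<dots> \<le> (\<Sum>t0\<in>Bad. exp (- (c * real j) * (norm (t - t0))\<^sup>2))"
      by (rule member_le_sum) (use t0 Bad_finite in auto)
    finally show ?thesis using d0 by simp
  next
    case False
    then have "\<bar>phi t\<bar> \<le> 1 - \<delta>" using dd t by (auto simp: not_less)
    then have "\<bar>phi t\<bar> ^ j \<le> (1 - \<delta>) ^ j" by (intro power_mono) simp_all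
    then show ?thesis using nn by simp
  qed
qed

lemma decay_main: "\<exists>A. \<forall>j y. j \<ge> 1 \<longrightarrow> pmf (walk_pmf \<theta> j) y \<le> A / (real j)\<^sup>2"
proof -
  obtain c r where c: "c > 0" and r: "r > 0"
    and quad: "\<forall>s. norm s < r \<longrightarrow> \<bar>phi s\<bar> \<le> 1 - c * (norm s)\<^sup>2 \<and> 0 \<le> 1 - c * (norm s)\<^sup>2"
    using phi_quad by blast
  obtain \<delta> where d: "\<delta> > 0" "\<delta> \<le> 1" and dd: "\<forall>t\<in>box. (\<forall>t0\<in>Bad. r \<le> dist t t0) \<longrightarrow> \<bar>phi t\<bar> \<le> 1 - \<delta>"
    using delta_exists[OF r] by blast
  define A where "A = 4 / \<delta>\<^sup>2 + real (card Bad) * 16 / c\<^sup>2"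
  show ?thesis
  proof (intro exI[of _ A] allI impI)
    fix j :: nat and y assume j: "j \<ge> 1"
    define b where "b = c * real j"
    have b0: "b > 0" unfolding b_def using c j by simp
    define N where "N = 4 * (nat \<lceil>sqrt b\<rceil> + 1)"
    have N0: "N > 0" unfolding N_def by simp
    have Ne: "even N" unfolding N_def by simp
    have Nb: "real N \<ge> 4 * sqrt b"
    proof -
      have "sqrt b \<le> real (nat \<lceil>sqrt b\<rceil>)" by linarith
      then show ?thesis unfolding N_def by simp
    qed
    have "pmf (walk_pmf \<theta> j) y \<le> (\<Sum>k\<in>grid N. \<bar>phi (tk N k)\<bar> ^ j) / real N ^ 4"
      by (rule pmf_le_grid[OF N0])
    also have "\<dots> \<le> (\<Sum>k\<in>grid N. (1 - \<delta>) ^ j + (\<Sum>t0\<in>Bad. exp (- b * (norm (tk N k - t0))\<^sup>2))) / real N ^ 4"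
      unfolding b_def
      by (intro divide_right_mono sum_mono pointwise[OF c r quad d dd] tk_box[OF N0]) auto
    also have "\<dots> = (real N ^ 4 * (1 - \<delta>) ^ j + (\<Sum>t0\<in>Bad. \<Sum>k\<in>grid N. exp (- b * (norm (tk N k - t0))\<^sup>2))) / real N ^ 4"
      by (simp add: sum.distrib card_grid sum.swap[of _ "grid N" Bad])
    also have "\<dots> \<le> (real N ^ 4 * (1 - \<delta>) ^ j + (\<Sum>t0\<in>Bad. real N ^ 4 * (16 / b\<^sup>2))) / real N ^ 4"
      by (intro divide_right_mono add_left_mono sum_mono gauss4[OF N0 Ne b0 Nb] Bad_coords) auto
    also have "\<dots> = (1 - \<delta>) ^ j + real (card Bad) * (16 / b\<^sup>2)"
      using N0 by (simp add: field_simps)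
    also have "\<dots> \<le> 4 / (\<delta>\<^sup>2 * (real j)\<^sup>2) + real (card Bad) * (16 / b\<^sup>2)"
      using bern_decay[OF d j] by simp
    also have "\<dots> = A / (real j)\<^sup>2"
      unfolding A_def b_def using j c d by (simp add: field_simps power_mult_distrib)
    finally show "pmf (walk_pmf \<theta> j) y \<le> A / (real j)\<^sup>2" .
  qed
qed

lemma decay: "\<exists>K. \<forall>j y. pmf (walk_pmf \<theta> j) y \<le> K / ((real j + 1) * (real j + 2))"
proof -
  obtain A where A: "\<And>j y. j \<ge> 1 \<Longrightarrow> pmf (walk_pmf \<theta> j) y \<le> A / (real j)\<^sup>2"
    using decay_main by blast
  have A0: "A \<ge> 0"
  proof -
    have "0 \<le> pmf (walk_pmf \<theta> 1) 0" by simp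
    also have "\<dots> \<le> A / (real 1)\<^sup>2" by (rule A) simp
    finally show ?thesis by simp
  qed
  define K where "K = max 2 (6 * A)"
  show ?thesis
  proof (intro exI[of _ K] allI)
    fix j y
    show "pmf (walk_pmf \<theta> j) y \<le> K / ((real j + 1) * (real j + 2))"
    proof (cases "j = 0")
      case True
      have "pmf (walk_pmf \<theta> j) y \<le> 1" by (rule pmf_le_1)
      also have "\<dots> \<le> K / 2" unfolding K_def by simp
      finally show ?thesis using True by simp
    next
      case False
      then have j: "j \<ge> 1" by simp
      have pos: "(real j + 1) * (real j + 2) > 0" by simp
      have le6: "(real j + 1) * (real j + 2) \<le> 6 * (real j)\<^sup>2"
      proof -
        have j1: "real j \<ge> 1" using j by simp
        then have "real j * 1 \<le> real j * real j" by (intro mult_left_mono) auto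
        then have "2 + 3 * real j \<le> 5 * (real j * real j)" using j1 by linarith
        then show ?thesis by (simp add: power2_eq_square algebra_simps)
      qed
      have "pmf (walk_pmf \<theta> j) y \<le> A / (real j)\<^sup>2" by (rule A[OF j])
      also have "\<dots> = 6 * A / (6 * (real j)\<^sup>2)" by simp
      also have "\<dots> \<le> 6 * A / ((real j + 1) * (real j + 2))"
        by (rule divide_left_mono) (use le6 pos A0 j in auto)
      also have "\<dots> \<le> K / ((real j + 1) * (real j + 2))"
        unfolding K_def using pos by (intro divide_right_mono) auto
      finally show ?thesis .
    qed
  qed
qed

end


theorem lemma3p10:
  fixes \<theta> :: "(int ^ 4) pmf" and \<sigma> :: real and p :: nat
  assumes symmetric: "\<And>x. pmf \<theta> (- x) = pmf \<theta> x"
    and exp_moment: "\<exists>c>0. (\<lambda>x. pmf \<theta> x * exp (c * znorm x)) summable_on UNIV"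
    and not_strict_subgroup: "\<not> (\<exists>H. add_subgroup H \<and> H \<noteq> UNIV \<and> set_pmf \<theta> \<subseteq> H)"
    and covariance: "\<And>i j. (\<Sum>\<^sub>\<infinity>x. pmf \<theta> x * real_of_int (x $ i) * real_of_int (x $ j))
                         = (if i = j then \<sigma>\<^sup>2 else 0)"
    and p: "p \<ge> 1"
  shows "\<exists>C::real. \<forall>n::nat. n \<ge> 2 \<longrightarrow>
           (\<integral>\<^sup>+ xs. (\<Sum>x\<leftarrow>xs. green \<theta> x) ^ p \<partial>measure_pmf (path_pmf \<theta> n))
             \<le> ennreal (C * (ln (real n)) ^ p)"
proof -
  have R: "rw \<theta> \<sigma>"
    by (rule rw.intro) (fact symmetric, fact exp_moment, fact not_strict_subgroup, fact covariance)
  obtain K where K: "\<And>j y. pmf (walk_pmf \<theta> j) y \<le> K / ((real j + 1) * (real j + 2))"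
    using rw.decay[OF R] by blast
  show ?thesis by (rule partB[OF symmetric K])
qed

end
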